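(* Let $\mathcal C$ be a left autonomous monoidal category and $T$ a bimonad on $\mathcal C$. The following are equivalent: (i) $T$ has a left unary antipode; (ii) $T$ has a left binary antipode; (iii) $T$ is a left Hopf monad. (The analogous statement holds for right autonomous categories, right unary/binary antipodes and right Hopf monads.)
   Context: Monoidal categories are strict. A bimonad on $\mathcal C$ is a monad $(T,\mu,\eta)$ with comonoidal structure $T_2(X,Y)\colon T(X\otimes Y)\to TX\otimes TY$, $T_0\colon T\mathbb 1\to\mathbb 1$ such that $\mu,\eta$ are comonoidal. $T$ is a left Hopf monad if $H^l_{X,Y}=(TX\otimes\mu_Y)T_2(X,TY)\colon T(X\otimes TY)\to TX\otimes TY$ is invertible for all $X,Y$. Left autonomous: every $X$ has a left dual ${}^\vee X$ with $\mathrm{ev}_X\colon{}^\vee X\otimes X\to\mathbb 1$, $\mathrm{coev}_X\colon\mathbb 1\to X\otimes{}^\vee X$; ${}^\vee f$ denotes the dual morphism. Such a category is left closed with $[X,Y]^l=Y\otimes{}^\vee X$, evaluation $\mathrm{ev}^X_Y=Y\otimes\mathrm{ev}_X$, and coevaluation $\mathrm{coev}^X_Y=Y\otimes\mathrm{coev}_X$. A left unary antipode is a natural transformation $\mathfrak s^l_X\colon T({}^\vee TX)\to{}^\vee X$ with $T_0T(\mathrm{ev}_X)T({}^\vee\eta_X\otimes X)=\mathrm{ev}_{TX}(\mathfrak s^l_{TX}T({}^\vee\mu_X)\otimes TX)T_2({}^\vee TX,X)$ and $(\eta_X\otimes{}^\vee X)\mathrm{coev}_XT_0=(\mu_X\otimes\mathfrak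 s^l_X)T_2(TX,{}^\vee TX)T(\mathrm{coev}_{TX})$. A left binary antipode is a natural transformation $s^l_{X,Y}\colon T[TX,Y]^l\to[X,TY]^l$ with (1) $T\big(\mathrm{ev}^X_Y([\eta_X,Y]^l\otimes X)\big)=\mathrm{ev}^{TX}_{TY}\big(s^l_{TX,Y}T[\mu_X,Y]^l\otimes TX\big)T_2([TX,Y]^l,X)$; (2) $[X,TY\otimes\eta_X]^l\,\mathrm{coev}^X_{TY}=[X,(TY\otimes\mu_X)T_2(Y,TX)]^l\,s^l_{X,Y\otimes TX}\,T(\mathrm{coev}^{TX}_Y)$. *)

theory Defs
  imports Main
begin

text \<open>A (small-or-large, set-based) category with objects of type 'o and arrows of type 'm.
  cComp g f denotes the composite g o f (first f, then g).  cTen is the tensor on objects,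
  cTenA the tensor on arrows, cUnit the unit object.  cDual X is the chosen left dual of X,
  with evaluation cEv X : cDual X (x) X -> 1 and coevaluation cCoev X : 1 -> X (x) cDual X.\<close>

record ('o, 'm) moncat =
  cObj  :: "'o set"
  cArr  :: "'m set"
  cDom  :: "'m \<Rightarrow> 'o"
  cCod  :: "'m \<Rightarrow> 'o"
  cComp :: "'m \<Rightarrow> 'm \<Rightarrow> 'm"
  cId   :: "'o \<Rightarrow> 'm"
  cTen  :: "'o \<Rightarrow> 'o \<Rightarrow> 'o"
  cTenA :: "'m \<Rightarrow> 'm \<Rightarrow> 'm"
  cUnit :: "'o"

record ('o, 'm) lacat = "('o, 'm) moncat" +
  cDual :: "'o \<Rightarrow> 'o"
  cEv   :: "'o \<Rightarrow> 'm"
  cCoev :: "'o \<Rightarrow> 'm"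

definition hom :: "('o, 'm, 'z) moncat_scheme \<Rightarrow> 'm \<Rightarrow> 'o \<Rightarrow> 'o \<Rightarrow> bool" where
  "hom C f X Y \<longleftrightarrow> f \<in> cArr C \<and> cDom C f = X \<and> cCod C f = Y"

definition wl :: "('o, 'm, 'z) moncat_scheme \<Rightarrow> 'o \<Rightarrow> 'm \<Rightarrow> 'm" where
  "wl C X f = cTenA C (cId C X) f"

definition wr :: "('o, 'm, 'z) moncat_scheme \<Rightarrow> 'm \<Rightarrow> 'o \<Rightarrow> 'm" where
  "wr C f X = cTenA C f (cId C X)"

definition strict_monoidal_category :: "('o, 'm, 'z) moncat_scheme \<Rightarrow> bool" where
  "strict_monoidal_category C \<longleftrightarrow>
     (\<forall>f\<in>cArr C. cDom C f \<in> cObj C \<and> cCod C f \<in> cObj C) \<and>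
     (\<forall>X\<in>cObj C. hom C (cId C X) X X) \<and>
     (\<forall>f\<in>cArr C. \<forall>g\<in>cArr C. cCod C f = cDom C g \<longrightarrow>
         hom C (cComp C g f) (cDom C f) (cCod C g)) \<and>
     (\<forall>f\<in>cArr C. cComp C (cId C (cCod C f)) f = f \<and> cComp C f (cId C (cDom C f)) = f) \<and>
     (\<forall>f\<in>cArr C. \<forall>g\<in>cArr C. \<forall>h\<in>cArr C. cCod C f = cDom C g \<longrightarrow> cCod C g = cDom C h \<longrightarrow>
         cComp C h (cComp C g f) = cComp C (cComp C h g) f) \<and>
     cUnit C \<in> cObj C \<and>
     (\<forall>X\<in>cObj C. \<forall>Y\<in>cObj C. cTen C X Y \<in> cObj C) \<and>
     (\<forall>f\<in>cArr C. \<forall>g\<in>cArr C.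
         hom C (cTenA C f g) (cTen C (cDom C f) (cDom C g)) (cTen C (cCod C f) (cCod C g))) \<and>
     (\<forall>X\<in>cObj C. \<forall>Y\<in>cObj C. cTenA C (cId C X) (cId C Y) = cId C (cTen C X Y)) \<and>
     (\<forall>f\<in>cArr C. \<forall>g\<in>cArr C. \<forall>f'\<in>cArr C. \<forall>g'\<in>cArr C.
         cCod C f = cDom C g \<longrightarrow> cCod C f' = cDom C g' \<longrightarrow>
         cTenA C (cComp C g f) (cComp C g' f') = cComp C (cTenA C g g') (cTenA C f f')) \<and>
     (\<forall>X\<in>cObj C. \<forall>Y\<in>cObj C. \<forall>Z\<in>cObj C. cTen C (cTen C X Y) Z = cTen C X (cTen C Y Z)) \<and>
     (\<forall>f\<in>cArr C. \<forall>g\<in>cArr C. \<forall>h\<in>cArr C. cTenA C (cTenA C f g) h = cTenA C f (cTenA C g h)) \<and>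
     (\<forall>X\<in>cObj C. cTen C (cUnit C) X = X \<and> cTen C X (cUnit C) = X) \<and>
     (\<forall>f\<in>cArr C. cTenA C (cId C (cUnit C)) f = f \<and> cTenA C f (cId C (cUnit C)) = f)"

definition left_autonomous :: "('o, 'm, 'z) lacat_scheme \<Rightarrow> bool" where
  "left_autonomous C \<longleftrightarrow> strict_monoidal_category C \<and>
     (\<forall>X\<in>cObj C. cDual C X \<in> cObj C \<and>
        hom C (cEv C X) (cTen C (cDual C X) X) (cUnit C) \<and>
        hom C (cCoev C X) (cUnit C) (cTen C X (cDual C X)) \<and>
        cComp C (wl C X (cEv C X)) (wr C (cCoev C X) X) = cId C X \<and>
        cComp C (wr C (cEv C X) (cDual C X)) (wl C (cDual C X) (cCoev C X)) = cId C (cDual C X))"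

definition dualm :: "('o, 'm, 'z) lacat_scheme \<Rightarrow> 'm \<Rightarrow> 'm" where
  "dualm C f =
     cComp C (wr C (cEv C (cCod C f)) (cDual C (cDom C f)))
       (cComp C (cTenA C (cId C (cDual C (cCod C f))) (cTenA C f (cId C (cDual C (cDom C f)))))
          (wl C (cDual C (cCod C f)) (cCoev C (cDom C f))))"

definition ihom :: "('o, 'm, 'z) lacat_scheme \<Rightarrow> 'o \<Rightarrow> 'o \<Rightarrow> 'o" where
  "ihom C X Y = cTen C Y (cDual C X)"

definition ihomm :: "('o, 'm, 'z) lacat_scheme \<Rightarrow> 'm \<Rightarrow> 'm \<Rightarrow> 'm" where
  "ihomm C f g = cTenA C g (dualm C f)"

record ('o, 'm) bimonad_data =
  TO  :: "'o \<Rightarrow> 'o"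
  TA  :: "'m \<Rightarrow> 'm"
  Mu  :: "'o \<Rightarrow> 'm"
  Eta :: "'o \<Rightarrow> 'm"
  T2  :: "'o \<Rightarrow> 'o \<Rightarrow> 'm"
  T0  :: "'m"

definition bimonad :: "('o, 'm, 'z) moncat_scheme \<Rightarrow> ('o, 'm) bimonad_data \<Rightarrow> bool" where
  "bimonad C T \<longleftrightarrow>
     \<comment> \<open>T is an endofunctor\<close>
     (\<forall>X\<in>cObj C. TO T X \<in> cObj C) \<and>
     (\<forall>f\<in>cArr C. hom C (TA T f) (TO T (cDom C f)) (TO T (cCod C f))) \<and>
     (\<forall>X\<in>cObj C. TA T (cId C X) = cId C (TO T X)) \<and>
     (\<forall>f\<in>cArr C. \<forall>g\<in>cArr C. cCod C f = cDom C g \<longrightarrow>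
         TA T (cComp C g f) = cComp C (TA T g) (TA T f)) \<and>
     \<comment> \<open>typing of the structure maps\<close>
     (\<forall>X\<in>cObj C. hom C (Mu T X) (TO T (TO T X)) (TO T X)) \<and>
     (\<forall>X\<in>cObj C. hom C (Eta T X) X (TO T X)) \<and>
     (\<forall>X\<in>cObj C. \<forall>Y\<in>cObj C. hom C (T2 T X Y) (TO T (cTen C X Y)) (cTen C (TO T X) (TO T Y))) \<and>
     hom C (T0 T) (TO T (cUnit C)) (cUnit C) \<and>
     \<comment> \<open>naturality\<close>
     (\<forall>f\<in>cArr C. cComp C (TA T f) (Mu T (cDom C f)) = cComp C (Mu T (cCod C f)) (TA T (TA T f))) \<and>
     (\<forall>f\<in>cArr C. cComp C (TA T f) (Eta T (cDom C f)) = cComp C (Eta T (cCod C f)) f) \<and>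
     (\<forall>f\<in>cArr C. \<forall>g\<in>cArr C.
         cComp C (cTenA C (TA T f) (TA T g)) (T2 T (cDom C f) (cDom C g)) =
         cComp C (T2 T (cCod C f) (cCod C g)) (TA T (cTenA C f g))) \<and>
     \<comment> \<open>monad laws\<close>
     (\<forall>X\<in>cObj C. cComp C (Mu T X) (TA T (Mu T X)) = cComp C (Mu T X) (Mu T (TO T X))) \<and>
     (\<forall>X\<in>cObj C. cComp C (Mu T X) (Eta T (TO T X)) = cId C (TO T X)) \<and>
     (\<forall>X\<in>cObj C. cComp C (Mu T X) (TA T (Eta T X)) = cId C (TO T X)) \<and>
     \<comment> \<open>comonoidal functor laws\<close>
     (\<forall>X\<in>cObj C. \<forall>Y\<in>cObj C. \<forall>Z\<in>cObj C.
         cComp C (wr C (T2 T X Y) (TO T Z)) (T2 T (cTen C X Y) Z) =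
         cComp C (wl C (TO T X) (T2 T Y Z)) (T2 T X (cTen C Y Z))) \<and>
     (\<forall>X\<in>cObj C. cComp C (wr C (T0 T) (TO T X)) (T2 T (cUnit C) X) = cId C (TO T X)) \<and>
     (\<forall>X\<in>cObj C. cComp C (wl C (TO T X) (T0 T)) (T2 T X (cUnit C)) = cId C (TO T X)) \<and>
     \<comment> \<open>mu is comonoidal\<close>
     (\<forall>X\<in>cObj C. \<forall>Y\<in>cObj C.
         cComp C (T2 T X Y) (Mu T (cTen C X Y)) =
         cComp C (cTenA C (Mu T X) (Mu T Y)) (cComp C (T2 T (TO T X) (TO T Y)) (TA T (T2 T X Y)))) \<and>
     cComp C (T0 T) (Mu T (cUnit C)) = cComp C (T0 T) (TA T (T0 T)) \<and>
     \<comment> \<open>eta is comonoidal\<close>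
     (\<forall>X\<in>cObj C. \<forall>Y\<in>cObj C.
         cComp C (T2 T X Y) (Eta T (cTen C X Y)) = cTenA C (Eta T X) (Eta T Y)) \<and>
     cComp C (T0 T) (Eta T (cUnit C)) = cId C (cUnit C)"

definition left_hopf :: "('o, 'm, 'z) moncat_scheme \<Rightarrow> ('o, 'm) bimonad_data \<Rightarrow> bool" where
  "left_hopf C T \<longleftrightarrow>
     (\<forall>X\<in>cObj C. \<forall>Y\<in>cObj C.
        \<exists>g. hom C g (cTen C (TO T X) (TO T Y)) (TO T (cTen C X (TO T Y))) \<and>
            cComp C g (cComp C (wl C (TO T X) (Mu T Y)) (T2 T X (TO T Y))) = cId C (TO T (cTen C X (TO T Y))) \<and>
            cComp C (cComp C (wl C (TO T X) (Mu T Y)) (T2 T X (TO T Y))) g = cId C (cTen C (TO T X) (TO T Y)))"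

definition is_left_unary_antipode ::
  "('o, 'm, 'z) lacat_scheme \<Rightarrow> ('o, 'm) bimonad_data \<Rightarrow> ('o \<Rightarrow> 'm) \<Rightarrow> bool" where
  "is_left_unary_antipode C T s \<longleftrightarrow>
     (\<forall>X\<in>cObj C. hom C (s X) (TO T (cDual C (TO T X))) (cDual C X)) \<and>
     (\<forall>f\<in>cArr C. cComp C (dualm C f) (s (cCod C f)) = cComp C (s (cDom C f)) (TA T (dualm C (TA T f)))) \<and>
     (\<forall>X\<in>cObj C.
        cComp C (T0 T) (cComp C (TA T (cEv C X)) (TA T (wr C (dualm C (Eta T X)) X))) =
        cComp C (cEv C (TO T X))
          (cComp C (wr C (cComp C (s (TO T X)) (TA T (dualm C (Mu T X)))) (TO T X))
             (T2 T (cDual C (TO T X)) X))) \<and>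
     (\<forall>X\<in>cObj C.
        cComp C (wr C (Eta T X) (cDual C X)) (cComp C (cCoev C X) (T0 T)) =
        cComp C (cTenA C (Mu T X) (s X))
          (cComp C (T2 T (TO T X) (cDual C (TO T X))) (TA T (cCoev C (TO T X)))))"

definition has_left_unary_antipode :: "('o, 'm, 'z) lacat_scheme \<Rightarrow> ('o, 'm) bimonad_data \<Rightarrow> bool" where
  "has_left_unary_antipode C T \<longleftrightarrow> (\<exists>s. is_left_unary_antipode C T s)"

definition is_left_binary_antipode ::
  "('o, 'm, 'z) lacat_scheme \<Rightarrow> ('o, 'm) bimonad_data \<Rightarrow> ('o \<Rightarrow> 'o \<Rightarrow> 'm) \<Rightarrow> bool" where
  "is_left_binary_antipode C T s \<longleftrightarrow>
     (\<forall>X\<in>cObj C. \<forall>Y\<in>cObj C. hom C (s X Y) (TO T (ihom C (TO T X) Y)) (ihom C X (TO T Y))) \<and>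
     (\<forall>f\<in>cArr C. \<forall>g\<in>cArr C.
        cComp C (s (cDom C f) (cCod C g)) (TA T (ihomm C (TA T f) g)) =
        cComp C (ihomm C f (TA T g)) (s (cCod C f) (cDom C g))) \<and>
     (\<forall>X\<in>cObj C. \<forall>Y\<in>cObj C.
        TA T (cComp C (wl C Y (cEv C X)) (wr C (ihomm C (Eta T X) (cId C Y)) X)) =
        cComp C (wl C (TO T Y) (cEv C (TO T X)))
          (cComp C (wr C (cComp C (s (TO T X) Y) (TA T (ihomm C (Mu T X) (cId C Y)))) (TO T X))
             (T2 T (ihom C (TO T X) Y) X))) \<and>
     (\<forall>X\<in>cObj C. \<forall>Y\<in>cObj C.
        cComp C (ihomm C (cId C X) (wl C (TO T Y) (Eta T X))) (wl C (TO T Y) (cCoev C X)) =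
        cComp C (ihomm C (cId C X) (cComp C (wl C (TO T Y) (Mu T X)) (T2 T Y (TO T X))))
          (cComp C (s X (cTen C Y (TO T X))) (TA T (wl C Y (cCoev C (TO T X))))))"

definition has_left_binary_antipode :: "('o, 'm, 'z) lacat_scheme \<Rightarrow> ('o, 'm) bimonad_data \<Rightarrow> bool" where
  "has_left_binary_antipode C T \<longleftrightarrow> (\<exists>s. is_left_binary_antipode C T s)"

end

theory Submission
  imports Defs
begin

locale LA =
  fixes C :: "('o,'m) lacat" and T :: "('o,'m) bimonad_data"
  assumes LAut: "left_autonomous C" and BM: "bimonad C T"
begin

abbreviation ob where "ob X \<equiv> X \<in> cObj C"
abbreviation arr where "arr f \<equiv> f \<in> cArr C"
abbreviation dm where "dm \<equiv> cDom C"
abbreviation cd where "cd \<equiv> cCod C"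
abbreviation cp (infixr "\<cdot>" 55) where "g \<cdot> f \<equiv> cComp C g f"
abbreviation Id where "Id \<equiv> cId C"
abbreviation tno (infixr "\<odot>" 65) where "X \<odot> Y \<equiv> cTen C X Y"
abbreviation tna (infixr "\<otimes>" 65) where "f \<otimes> g \<equiv> cTenA C f g"
abbreviation U where "U \<equiv> cUnit C"
abbreviation D where "D \<equiv> cDual C"
abbreviation ev where "ev \<equiv> cEv C"
abbreviation coev where "coev \<equiv> cCoev C"
abbreviation TT where "TT \<equiv> TO T"
abbreviation Tm where "Tm \<equiv> TA T"
abbreviation mu where "mu \<equiv> Mu T"
abbreviation eta where "eta \<equiv> Eta T"
abbreviation t2 where "t2 \<equiv> T2 T"
abbreviation t0 where "t0 \<equiv> T0 T"
abbreviation dual where "dual \<equiv> dualm C"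

lemma SM: "strict_monoidal_category C" using LAut left_autonomous_def by blast

named_theorems ty

lemma dm_ob[ty]: "arr f \<Longrightarrow> ob (dm f)" using SM unfolding strict_monoidal_category_def hom_def by auto
lemma cd_ob[ty]: "arr f \<Longrightarrow> ob (cd f)" using SM unfolding strict_monoidal_category_def hom_def by auto
lemma Id_ty[ty]: "ob X \<Longrightarrow> arr (Id X)" "ob X \<Longrightarrow> dm (Id X) = X" "ob X \<Longrightarrow> cd (Id X) = X"
  using SM unfolding strict_monoidal_category_def hom_def by auto
lemma cp_ty[ty]: "arr f \<Longrightarrow> arr g \<Longrightarrow> cd f = dm g \<Longrightarrow> arr (g \<cdot> f)"
  "arr f \<Longrightarrow> arr g \<Longrightarrow> cd f = dm g \<Longrightarrow> dm (g \<cdot> f) = dm f"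
  "arr f \<Longrightarrow> arr g \<Longrightarrow> cd f = dm g \<Longrightarrow> cd (g \<cdot> f) = cd g"
  using SM unfolding strict_monoidal_category_def hom_def by auto
lemma U_ty[ty]: "ob U" using SM unfolding strict_monoidal_category_def hom_def by auto
lemma tno_ty[ty]: "ob X \<Longrightarrow> ob Y \<Longrightarrow> ob (X \<odot> Y)" using SM unfolding strict_monoidal_category_def hom_def by auto
lemma tna_ty[ty]: "arr f \<Longrightarrow> arr g \<Longrightarrow> arr (f \<otimes> g)"
  "arr f \<Longrightarrow> arr g \<Longrightarrow> dm (f \<otimes> g) = dm f \<odot> dm g"
  "arr f \<Longrightarrow> arr g \<Longrightarrow> cd (f \<otimes> g) = cd f \<odot> cd g"
  using SM unfolding strict_monoidal_category_def hom_def by auto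
lemma tno_assoc[ty]: "ob X \<Longrightarrow> ob Y \<Longrightarrow> ob Z \<Longrightarrow> (X \<odot> Y) \<odot> Z = X \<odot> (Y \<odot> Z)"
  using SM unfolding strict_monoidal_category_def hom_def by auto
lemma tno_U[ty]: "ob X \<Longrightarrow> U \<odot> X = X" "ob X \<Longrightarrow> X \<odot> U = X"
  using SM unfolding strict_monoidal_category_def hom_def by auto

lemma idL: "arr f \<Longrightarrow> cd f = X \<Longrightarrow> Id X \<cdot> f = f"
  using SM unfolding strict_monoidal_category_def hom_def by auto
lemma idR: "arr f \<Longrightarrow> dm f = X \<Longrightarrow> f \<cdot> Id X = f"
  using SM unfolding strict_monoidal_category_def hom_def by auto
lemma assoc: "arr f \<Longrightarrow> arr g \<Longrightarrow> arr h \<Longrightarrow> cd f = dm g \<Longrightarrow> cd g = dm h \<Longrightarrow> (h \<cdot> g) \<cdot> f = h \<cdot> g \<cdot> f"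
  using SM unfolding strict_monoidal_category_def hom_def by auto
lemma Id_tna: "ob X \<Longrightarrow> ob Y \<Longrightarrow> Id X \<otimes> Id Y = Id (X \<odot> Y)"
  using SM unfolding strict_monoidal_category_def hom_def by auto
lemma interchange: "arr f \<Longrightarrow> arr g \<Longrightarrow> arr f' \<Longrightarrow> arr g' \<Longrightarrow> cd f = dm g \<Longrightarrow> cd f' = dm g' \<Longrightarrow>
   (g \<cdot> f) \<otimes> (g' \<cdot> f') = (g \<otimes> g') \<cdot> (f \<otimes> f')"
  using SM unfolding strict_monoidal_category_def hom_def by auto
lemma tna_assoc: "arr f \<Longrightarrow> arr g \<Longrightarrow> arr h \<Longrightarrow> (f \<otimes> g) \<otimes> h = f \<otimes> g \<otimes> h"
  using SM unfolding strict_monoidal_category_def hom_def by auto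
lemma tna_U: "arr f \<Longrightarrow> Id U \<otimes> f = f" "arr f \<Longrightarrow> f \<otimes> Id U = f"
  using SM unfolding strict_monoidal_category_def hom_def by auto

lemma dual_ax: "ob X \<Longrightarrow> ob (D X)"
  "ob X \<Longrightarrow> arr (ev X)" "ob X \<Longrightarrow> dm (ev X) = D X \<odot> X" "ob X \<Longrightarrow> cd (ev X) = U"
  "ob X \<Longrightarrow> arr (coev X)" "ob X \<Longrightarrow> dm (coev X) = U" "ob X \<Longrightarrow> cd (coev X) = X \<odot> D X"
  "ob X \<Longrightarrow> (Id X \<otimes> ev X) \<cdot> (coev X \<otimes> Id X) = Id X"
  "ob X \<Longrightarrow> (ev X \<otimes> Id (D X)) \<cdot> (Id (D X) \<otimes> coev X) = Id (D X)"
  using LAut unfolding left_autonomous_def hom_def wl_def wr_def by auto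

lemmas D_ty[ty] = dual_ax(1-7)
lemmas zig = dual_ax(8) and zag = dual_ax(9)

lemma BMu: "bimonad C T" by (rule BM)
lemma bm_ty[ty]:
  "ob X \<Longrightarrow> ob (TT X)"
  "arr f \<Longrightarrow> arr (Tm f)" "arr f \<Longrightarrow> dm (Tm f) = TT (dm f)" "arr f \<Longrightarrow> cd (Tm f) = TT (cd f)"
  "ob X \<Longrightarrow> arr (mu X)" "ob X \<Longrightarrow> dm (mu X) = TT (TT X)" "ob X \<Longrightarrow> cd (mu X) = TT X"
  "ob X \<Longrightarrow> arr (eta X)" "ob X \<Longrightarrow> dm (eta X) = X" "ob X \<Longrightarrow> cd (eta X) = TT X"
  "ob X \<Longrightarrow> ob Y \<Longrightarrow> arr (t2 X Y)" "ob X \<Longrightarrow> ob Y \<Longrightarrow> dm (t2 X Y) = TT (X \<odot> Y)"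
  "ob X \<Longrightarrow> ob Y \<Longrightarrow> cd (t2 X Y) = TT X \<odot> TT Y"
  "arr t0" "dm t0 = TT U" "cd t0 = U"
  using BM unfolding bimonad_def hom_def by auto

lemma Tm_Id: "ob X \<Longrightarrow> Tm (Id X) = Id (TT X)" using BM unfolding bimonad_def hom_def by auto
lemma Tm_cp: "arr f \<Longrightarrow> arr g \<Longrightarrow> cd f = dm g \<Longrightarrow> Tm (g \<cdot> f) = Tm g \<cdot> Tm f" using BM unfolding bimonad_def hom_def by auto
lemma mu_nat: "arr f \<Longrightarrow> Tm f \<cdot> mu (dm f) = mu (cd f) \<cdot> Tm (Tm f)" using BM unfolding bimonad_def hom_def by auto
lemma eta_nat: "arr f \<Longrightarrow> Tm f \<cdot> eta (dm f) = eta (cd f) \<cdot> f" using BM unfolding bimonad_def hom_def by auto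
lemma t2_nat: "arr f \<Longrightarrow> arr g \<Longrightarrow> (Tm f \<otimes> Tm g) \<cdot> t2 (dm f) (dm g) = t2 (cd f) (cd g) \<cdot> Tm (f \<otimes> g)"
  using BM unfolding bimonad_def hom_def by auto
lemma mu_assoc: "ob X \<Longrightarrow> mu X \<cdot> Tm (mu X) = mu X \<cdot> mu (TT X)" using BM unfolding bimonad_def hom_def by auto
lemma mu_eta1: "ob X \<Longrightarrow> mu X \<cdot> eta (TT X) = Id (TT X)" using BM unfolding bimonad_def hom_def by auto
lemma mu_eta2: "ob X \<Longrightarrow> mu X \<cdot> Tm (eta X) = Id (TT X)" using BM unfolding bimonad_def hom_def by auto
lemma t2_coassoc: "ob X \<Longrightarrow> ob Y \<Longrightarrow> ob Z \<Longrightarrow>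
   (t2 X Y \<otimes> Id (TT Z)) \<cdot> t2 (X \<odot> Y) Z = (Id (TT X) \<otimes> t2 Y Z) \<cdot> t2 X (Y \<odot> Z)"
  using BM unfolding bimonad_def wl_def wr_def hom_def by auto
lemma t0_counitL: "ob X \<Longrightarrow> (t0 \<otimes> Id (TT X)) \<cdot> t2 U X = Id (TT X)"
  using BM unfolding bimonad_def wl_def wr_def hom_def by auto
lemma t0_counitR: "ob X \<Longrightarrow> (Id (TT X) \<otimes> t0) \<cdot> t2 X U = Id (TT X)"
  using BM unfolding bimonad_def wl_def wr_def hom_def by auto
lemma mu_t2: "ob X \<Longrightarrow> ob Y \<Longrightarrow> t2 X Y \<cdot> mu (X \<odot> Y) = (mu X \<otimes> mu Y) \<cdot> t2 (TT X) (TT Y) \<cdot> Tm (t2 X Y)"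
  using BM unfolding bimonad_def hom_def by auto
lemma eta_t2: "ob X \<Longrightarrow> ob Y \<Longrightarrow> t2 X Y \<cdot> eta (X \<odot> Y) = eta X \<otimes> eta Y"
  using BM unfolding bimonad_def hom_def by auto

lemma assocR: "arr f \<Longrightarrow> arr g \<Longrightarrow> arr h \<Longrightarrow> cd f = dm g \<Longrightarrow> cd g = dm h \<Longrightarrow> (h \<cdot> g) \<cdot> f = h \<cdot> g \<cdot> f"
  by (rule assoc)
lemma idL': "arr f \<Longrightarrow> Id (cd f) \<cdot> f = f" by (simp add: idL)
lemma idR': "arr f \<Longrightarrow> f \<cdot> Id (dm f) = f" by (simp add: idR)

lemma ext: "a \<cdot> b = c \<Longrightarrow> arr y \<Longrightarrow> arr b \<Longrightarrow> arr a \<Longrightarrow> cd y = dm b \<Longrightarrow> cd b = dm a \<Longrightarrow> a \<cdot> b \<cdot> y = c \<cdot> y"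
  by (metis assoc)

lemma ext3: "a \<cdot> b \<cdot> c = d \<Longrightarrow> arr y \<Longrightarrow> arr c \<Longrightarrow> arr b \<Longrightarrow> arr a \<Longrightarrow> cd y = dm c \<Longrightarrow> cd c = dm b \<Longrightarrow> cd b = dm a \<Longrightarrow> a \<cdot> b \<cdot> c \<cdot> y = d \<cdot> y"
  by (metis assoc cp_ty)

lemma interchangeR: "arr f \<Longrightarrow> arr g \<Longrightarrow> arr f' \<Longrightarrow> arr g' \<Longrightarrow> cd f = dm g \<Longrightarrow> cd f' = dm g' \<Longrightarrow>
   (g \<otimes> g') \<cdot> (f \<otimes> f') = (g \<cdot> f) \<otimes> (g' \<cdot> f')" by (simp add: interchange)

lemma slide1': "arr f \<Longrightarrow> arr g \<Longrightarrow> (f \<otimes> Id (cd g)) \<cdot> (Id (dm f) \<otimes> g) = f \<otimes> g"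
  by (simp add: interchangeR ty idL idR)
lemma slide2': "arr f \<Longrightarrow> arr g \<Longrightarrow> (Id (cd f) \<otimes> g) \<cdot> (f \<otimes> Id (dm g)) = f \<otimes> g"
  by (simp add: interchangeR ty idL idR)
lemma slide1: "arr f \<Longrightarrow> arr g \<Longrightarrow> cd g = Y \<Longrightarrow> dm f = X \<Longrightarrow> (f \<otimes> Id Y) \<cdot> (Id X \<otimes> g) = f \<otimes> g"
  using slide1' by blast
lemma slide2: "arr f \<Longrightarrow> arr g \<Longrightarrow> cd f = X \<Longrightarrow> dm g = Y \<Longrightarrow> (Id X \<otimes> g) \<cdot> (f \<otimes> Id Y) = f \<otimes> g"
  using slide2' by blast
lemma tcpL: "arr f \<Longrightarrow> arr g \<Longrightarrow> cd f = dm g \<Longrightarrow> ob Z \<Longrightarrow> (g \<cdot> f) \<otimes> Id Z = (g \<otimes> Id Z) \<cdot> (f \<otimes> Id Z)"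
  by (simp add: interchangeR ty idL idR)
lemma tcpR: "arr f \<Longrightarrow> arr g \<Longrightarrow> cd f = dm g \<Longrightarrow> ob Z \<Longrightarrow> Id Z \<otimes> (g \<cdot> f) = (Id Z \<otimes> g) \<cdot> (Id Z \<otimes> f)"
  by (simp add: interchangeR ty idL idR)

end

context LA begin

abbreviation tr where "tr A X g \<equiv> (g \<otimes> Id (D X)) \<cdot> (Id A \<otimes> coev X)"
abbreviation untr where "untr B X h \<equiv> (Id B \<otimes> ev X) \<cdot> (h \<otimes> Id X)"

lemma interchangeR3: "arr f \<Longrightarrow> arr g \<Longrightarrow> arr f' \<Longrightarrow> arr g' \<Longrightarrow> arr h \<Longrightarrow> cd f = dm g \<Longrightarrow> cd f' = dm g' \<Longrightarrow>
   cd h = dm f \<odot> dm f' \<Longrightarrow> (g \<otimes> g') \<cdot> (f \<otimes> f') \<cdot> h = ((g \<cdot> f) \<otimes> (g' \<cdot> f')) \<cdot> h"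
  by (simp add: interchange[symmetric] assoc[symmetric] ty)

lemma untr_tr: assumes "arr g" "ob A" "ob X" "dm g = A \<odot> X"
  shows "untr (cd g) X (tr A X g) = g"
proof -
  have "untr (cd g) X (tr A X g) = (Id (cd g) \<otimes> ev X) \<cdot> (g \<otimes> Id (D X) \<otimes> Id X) \<cdot> (Id A \<otimes> coev X \<otimes> Id X)"
    using assms by (simp add: tcpL ty tna_assoc)
  also have "... = (g \<otimes> ev X) \<cdot> (Id A \<otimes> coev X \<otimes> Id X)"
    using assms by (simp add: Id_tna interchangeR3 ty idL idR)
  also have "... = g \<cdot> (Id A \<otimes> Id X \<otimes> ev X) \<cdot> (Id A \<otimes> coev X \<otimes> Id X)"
  proof -
    have "g \<otimes> ev X = (g \<otimes> Id U) \<cdot> (Id (A \<odot> X) \<otimes> ev X)" using slide1[of g "ev X" U "A\<odot>X"] assms by (simp add: ty)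
    also have "... = g \<cdot> (Id A \<otimes> Id X \<otimes> ev X)" using assms by (simp add: tna_U Id_tna[symmetric] tna_assoc ty)
    finally have "g \<otimes> ev X = g \<cdot> (Id A \<otimes> Id X \<otimes> ev X)" .
    then show ?thesis using assms by (simp add: assoc ty)
  qed
  also have "... = g \<cdot> (Id A \<otimes> ((Id X \<otimes> ev X) \<cdot> (coev X \<otimes> Id X)))"
    using assms by (simp add: interchange[symmetric] ty idL idR)
  also have "... = g" using assms by (simp add: zig Id_tna idR ty)
  finally show ?thesis .
qed


lemma tens_split1: "arr f \<Longrightarrow> arr g \<Longrightarrow> f \<otimes> g = (f \<otimes> Id (cd g)) \<cdot> (Id (dm f) \<otimes> g)"
  by (simp add: slide1')
lemma tens_split2: "arr f \<Longrightarrow> arr g \<Longrightarrow> f \<otimes> g = (Id (cd f) \<otimes> g) \<cdot> (f \<otimes> Id (dm g))"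
  by (simp add: slide2')

lemma tr_untr: assumes "arr h" "ob A" "ob B" "ob X" "dm h = A" "cd h = B \<odot> D X"
  shows "tr A X (untr B X h) = h"
proof -
  have "tr A X (untr B X h) = (Id B \<otimes> ev X \<otimes> Id (D X)) \<cdot> (h \<otimes> Id X \<otimes> Id (D X)) \<cdot> (Id A \<otimes> coev X)"
    using assms by (simp add: tcpL ty tna_assoc assoc)
  also have "... = (Id B \<otimes> ev X \<otimes> Id (D X)) \<cdot> (h \<otimes> coev X)"
    using assms by (simp add: Id_tna slide1 ty)
  also have "... = (Id B \<otimes> ev X \<otimes> Id (D X)) \<cdot> (Id B \<otimes> Id (D X) \<otimes> coev X) \<cdot> h"
  proof -
    have "h \<otimes> coev X = (Id (B \<odot> D X) \<otimes> coev X) \<cdot> (h \<otimes> Id U)" using slide2[of h "coev X" "B \<odot> D X" U] assms by (simp add: ty)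
    also have "... = (Id B \<otimes> Id (D X) \<otimes> coev X) \<cdot> h" using assms by (simp add: tna_U Id_tna[symmetric] tna_assoc ty)
    finally have "h \<otimes> coev X = (Id B \<otimes> Id (D X) \<otimes> coev X) \<cdot> h" .
    then show ?thesis using assms by simp
  qed
  also have "... = (Id B \<otimes> ((ev X \<otimes> Id (D X)) \<cdot> (Id (D X) \<otimes> coev X))) \<cdot> h"
    using assms by (simp add: assoc[symmetric] interchange[symmetric] ty idL)
  also have "... = h" using assms by (simp add: zag Id_tna idL ty)
  finally show ?thesis .
qed

lemma untr_inj: assumes "arr h1" "arr h2" "ob A" "ob B" "ob X" "dm h1 = A" "cd h1 = B \<odot> D X"
  "dm h2 = A" "cd h2 = B \<odot> D X" "untr B X h1 = untr B X h2" shows "h1 = h2"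
proof -
  have "h1 = tr A X (untr B X h1)" using tr_untr[OF assms(1,3,4,5,6,7)] by (rule sym)
  also have "... = tr A X (untr B X h2)" by (simp only: assms(10))
  also have "... = h2" using tr_untr[OF assms(2,3,4,5,8,9)] .
  finally show ?thesis .
qed

lemma untr_pre: "arr h \<Longrightarrow> arr a \<Longrightarrow> ob X \<Longrightarrow> ob B \<Longrightarrow> cd a = dm h \<Longrightarrow> cd h = B \<odot> D X \<Longrightarrow>
   untr B X (h \<cdot> a) = untr B X h \<cdot> (a \<otimes> Id X)"
  by (simp add: tcpL assoc ty)

lemma untr_post: assumes "arr h" "arr b" "ob X" "cd h = dm b \<odot> D X"
  shows "untr (cd b) X ((b \<otimes> Id (D X)) \<cdot> h) = b \<cdot> untr (dm b) X h"
proof -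
  have "untr (cd b) X ((b \<otimes> Id (D X)) \<cdot> h) = ((Id (cd b) \<otimes> ev X) \<cdot> (b \<otimes> Id (D X) \<otimes> Id X)) \<cdot> (h \<otimes> Id X)"
    using assms by (simp add: tcpL assoc tna_assoc ty)
  also have "... = (b \<otimes> ev X) \<cdot> (h \<otimes> Id X)"
    using assms by (simp add: Id_tna slide2 ty)
  also have "... = (b \<cdot> (Id (dm b) \<otimes> ev X)) \<cdot> (h \<otimes> Id X)"
  proof -
    have "b \<otimes> ev X = (b \<otimes> Id U) \<cdot> (Id (dm b) \<otimes> ev X)" using slide1[of b "ev X" U "dm b"] assms by (simp add: ty)
    then show ?thesis using assms by (simp add: tna_U)
  qed
  finally show ?thesis using assms by (simp add: assoc ty)
qed

lemma dual_ty[ty]: "arr f \<Longrightarrow> arr (dual f)" "arr f \<Longrightarrow> dm (dual f) = D (cd f)" "arr f \<Longrightarrow> cd (dual f) = D (dm f)"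
  unfolding dualm_def wl_def wr_def by (simp_all add: ty)

lemma dual_tr: "arr f \<Longrightarrow> dual f = tr (D (cd f)) (dm f) (ev (cd f) \<cdot> (Id (D (cd f)) \<otimes> f))"
  unfolding dualm_def wl_def wr_def by (simp add: tcpL tna_assoc ty assoc)

lemma dual_ev: "arr f \<Longrightarrow> ev (dm f) \<cdot> (dual f \<otimes> Id (dm f)) = ev (cd f) \<cdot> (Id (D (cd f)) \<otimes> f)"
  using untr_tr[of "ev (cd f) \<cdot> (Id (D (cd f)) \<otimes> f)" "D (cd f)" "dm f"]
  by (simp add: dual_tr[symmetric] ty tna_U)

lemma dual_uniq: assumes "arr f" "arr d" "dm d = D (cd f)" "cd d = D (dm f)"
  "ev (dm f) \<cdot> (d \<otimes> Id (dm f)) = ev (cd f) \<cdot> (Id (D (cd f)) \<otimes> f)"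
  shows "d = dual f"
  apply (rule untr_inj[of d "dual f" "D (cd f)" U "dm f"])
  using assms by (simp_all add: ty tna_U dual_ev)

lemma dual_Id: "ob X \<Longrightarrow> dual (Id X) = Id (D X)"
  by (rule sym, rule dual_uniq) (simp_all add: ty)


lemma dual_cp: assumes f: "arr f" and g: "arr g" and fg: "cd f = dm g"
  shows "dual (g \<cdot> f) = dual f \<cdot> dual g"
proof (rule sym, rule dual_uniq)
  let ?X = "dm f" and ?Y = "cd f" and ?Z = "cd g"
  have "ev ?X \<cdot> ((dual f \<cdot> dual g) \<otimes> Id ?X) = ev ?X \<cdot> (dual f \<otimes> Id ?X) \<cdot> (dual g \<otimes> Id ?X)"
    using assms by (simp add: tcpL ty)
  also have "... = ev ?Y \<cdot> (Id (D ?Y) \<otimes> f) \<cdot> (dual g \<otimes> Id ?X)"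
    using assms by (simp add: ext[OF dual_ev] ty assoc)
  also have "... = ev ?Y \<cdot> (dual g \<otimes> f)"
    using assms by (simp add: slide2 ty)
  also have "... = ev ?Y \<cdot> (dual g \<otimes> Id ?Y) \<cdot> (Id (D ?Z) \<otimes> f)"
    using assms by (simp add: slide1 ty)
  also have "... = ev ?Z \<cdot> (Id (D ?Z) \<otimes> g) \<cdot> (Id (D ?Z) \<otimes> f)"
    using assms by (simp add: ext[OF dual_ev] ty assoc)
  also have "... = ev ?Z \<cdot> (Id (D ?Z) \<otimes> (g \<cdot> f))"
    using assms by (simp add: tcpR ty)
  finally show "ev (dm (g \<cdot> f)) \<cdot> ((dual f \<cdot> dual g) \<otimes> Id (dm (g \<cdot> f))) =
    ev (cd (g \<cdot> f)) \<cdot> (Id (D (cd (g \<cdot> f))) \<otimes> (g \<cdot> f))" using assms by (simp add: ty)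
qed (use assms in \<open>simp_all add: ty\<close>)

lemma coev_dual: assumes f: "arr f"
  shows "(Id (cd f) \<otimes> dual f) \<cdot> coev (cd f) = (f \<otimes> Id (D (dm f))) \<cdot> coev (dm f)"
proof (rule untr_inj[of _ _ U "cd f" "dm f"])
  let ?X = "dm f" and ?Y = "cd f"
  have "untr ?Y ?X ((Id ?Y \<otimes> dual f) \<cdot> coev ?Y) = (Id ?Y \<otimes> ev ?X) \<cdot> (Id ?Y \<otimes> dual f \<otimes> Id ?X) \<cdot> (coev ?Y \<otimes> Id ?X)"
    using assms by (simp add: tcpL ty tna_assoc assoc)
  also have "... = (Id ?Y \<otimes> (ev ?X \<cdot> (dual f \<otimes> Id ?X))) \<cdot> (coev ?Y \<otimes> Id ?X)"
    using assms by (simp add: assoc[symmetric] interchange[symmetric] ty idL)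
  also have "... = (Id ?Y \<otimes> (ev ?Y \<cdot> (Id (D ?Y) \<otimes> f))) \<cdot> (coev ?Y \<otimes> Id ?X)"
    using assms by (simp add: dual_ev)
  also have "... = (Id ?Y \<otimes> ev ?Y) \<cdot> (Id (?Y \<odot> D ?Y) \<otimes> f) \<cdot> (coev ?Y \<otimes> Id ?X)"
    using assms by (simp add: tcpR ty tna_assoc assoc Id_tna[symmetric])
  also have "... = (Id ?Y \<otimes> ev ?Y) \<cdot> (coev ?Y \<otimes> f)"
    using assms by (simp add: slide2 ty)
  also have "... = (Id ?Y \<otimes> ev ?Y) \<cdot> (coev ?Y \<otimes> Id ?Y) \<cdot> f"
  proof -
    have "coev ?Y \<otimes> f = (coev ?Y \<otimes> Id ?Y) \<cdot> (Id U \<otimes> f)" using slide1[of "coev ?Y" f ?Y U] assms by (simp add: ty)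
    then show ?thesis using assms by (simp add: tna_U)
  qed
  also have "... = f" using assms by (simp add: ext[OF zig] idL ty)
  finally have L: "untr ?Y ?X ((Id ?Y \<otimes> dual f) \<cdot> coev ?Y) = f" .
  have "untr ?Y ?X ((f \<otimes> Id (D ?X)) \<cdot> coev ?X) = (Id ?Y \<otimes> ev ?X) \<cdot> (f \<otimes> Id (D ?X) \<otimes> Id ?X) \<cdot> (coev ?X \<otimes> Id ?X)"
    using assms by (simp add: tcpL ty tna_assoc assoc)
  also have "... = (f \<otimes> ev ?X) \<cdot> (coev ?X \<otimes> Id ?X)"
    using assms by (simp add: Id_tna slide2 ty assoc[symmetric])
  also have "... = f \<cdot> (Id ?X \<otimes> ev ?X) \<cdot> (coev ?X \<otimes> Id ?X)"
  proof -
    have "f \<otimes> ev ?X = (f \<otimes> Id U) \<cdot> (Id ?X \<otimes> ev ?X)" using slide1[of f "ev ?X" U ?X] assms by (simp add: ty)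
    then show ?thesis using assms by (simp add: tna_U assoc ty)
  qed
  also have "... = f" using assms by (simp add: zig idR ty)
  finally show "untr ?Y ?X ((Id ?Y \<otimes> dual f) \<cdot> coev ?Y) = untr ?Y ?X ((f \<otimes> Id (D ?X)) \<cdot> coev ?X)" using L by simp
qed (use assms in \<open>simp_all add: ty\<close>)


lemma t2_natL: "arr f \<Longrightarrow> ob Y \<Longrightarrow> (Tm f \<otimes> Id (TT Y)) \<cdot> t2 (dm f) Y = t2 (cd f) Y \<cdot> Tm (f \<otimes> Id Y)"
  using t2_nat[of f "Id Y"] by (simp add: Tm_Id ty)
lemma t2_natR: "arr g \<Longrightarrow> ob X \<Longrightarrow> (Id (TT X) \<otimes> Tm g) \<cdot> t2 X (dm g) = t2 X (cd g) \<cdot> Tm (Id X \<otimes> g)"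
  using t2_nat[of "Id X" g] by (simp add: Tm_Id ty)
lemma Id_tna3: "ob X \<Longrightarrow> ob Y \<Longrightarrow> arr f \<Longrightarrow> Id X \<otimes> Id Y \<otimes> f = Id (X \<odot> Y) \<otimes> f"
  by (simp add: tna_assoc[symmetric] Id_tna ty)
lemma Tm_IdU: "Tm (Id U) = Id (TT U)" by (simp add: Tm_Id ty)


lemma tcpL2: "arr f \<Longrightarrow> arr g \<Longrightarrow> arr h \<Longrightarrow> cd f = dm g \<Longrightarrow> (g \<cdot> f) \<otimes> h = (g \<otimes> h) \<cdot> (f \<otimes> Id (dm h))"
  by (simp add: interchange[symmetric] idR ty)
lemma tcpL3: "arr f \<Longrightarrow> arr g \<Longrightarrow> arr h \<Longrightarrow> cd f = dm g \<Longrightarrow> (g \<cdot> f) \<otimes> h = (g \<otimes> Id (cd h)) \<cdot> (f \<otimes> h)"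
  by (simp add: interchange[symmetric] idL ty)
lemma tcpR2: "arr f \<Longrightarrow> arr g \<Longrightarrow> arr h \<Longrightarrow> cd f = dm g \<Longrightarrow> h \<otimes> (g \<cdot> f) = (h \<otimes> g) \<cdot> (Id (dm h) \<otimes> f)"
  by (simp add: interchange[symmetric] idR ty)
lemma tcpR3: "arr f \<Longrightarrow> arr g \<Longrightarrow> arr h \<Longrightarrow> cd f = dm g \<Longrightarrow> h \<otimes> (g \<cdot> f) = (Id (cd h) \<otimes> g) \<cdot> (h \<otimes> f)"
  by (simp add: interchange[symmetric] idL ty)

end


locale UA = LA + fixes s assumes UA: "is_left_unary_antipode C T s"
begin
lemma s_ty[ty]: "ob X \<Longrightarrow> arr (s X)" "ob X \<Longrightarrow> dm (s X) = TT (D (TT X))" "ob X \<Longrightarrow> cd (s X) = D X"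
  using UA unfolding is_left_unary_antipode_def hom_def by auto
lemma s_nat: "arr f \<Longrightarrow> dual f \<cdot> s (cd f) = s (dm f) \<cdot> Tm (dual (Tm f))"
  using UA unfolding is_left_unary_antipode_def by auto
lemma s_ax1: "ob X \<Longrightarrow> t0 \<cdot> Tm (ev X) \<cdot> Tm (dual (eta X) \<otimes> Id X) =
   ev (TT X) \<cdot> ((s (TT X) \<cdot> Tm (dual (mu X))) \<otimes> Id (TT X)) \<cdot> t2 (D (TT X)) X"
  using UA unfolding is_left_unary_antipode_def wr_def by auto
lemma s_ax2: "ob X \<Longrightarrow> (eta X \<otimes> Id (D X)) \<cdot> coev X \<cdot> t0 = (mu X \<otimes> s X) \<cdot> t2 (TT X) (D (TT X)) \<cdot> Tm (coev (TT X))"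
  using UA unfolding is_left_unary_antipode_def wr_def by auto

definition sb where "sb X Y = (Id (TT Y) \<otimes> s X) \<cdot> t2 Y (D (TT X))"

lemma sb_ty[ty]: "ob X \<Longrightarrow> ob Y \<Longrightarrow> arr (sb X Y)" "ob X \<Longrightarrow> ob Y \<Longrightarrow> dm (sb X Y) = TT (Y \<odot> D (TT X))"
  "ob X \<Longrightarrow> ob Y \<Longrightarrow> cd (sb X Y) = TT Y \<odot> D X"
  unfolding sb_def by (simp_all add: ty)

lemma sb_nat: assumes f: "arr f" and g: "arr g"
  shows "sb (dm f) (cd g) \<cdot> Tm (g \<otimes> dual (Tm f)) = (Tm g \<otimes> dual f) \<cdot> sb (cd f) (dm g)"
proof -
  have "sb (dm f) (cd g) \<cdot> Tm (g \<otimes> dual (Tm f)) =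
     (Id (TT (cd g)) \<otimes> s (dm f)) \<cdot> (Tm g \<otimes> Tm (dual (Tm f))) \<cdot> t2 (dm g) (D (TT (cd f)))"
    using t2_nat[of g "dual (Tm f)"] assms unfolding sb_def by (simp add: ty assoc)
  also have "... = (Tm g \<otimes> (s (dm f) \<cdot> Tm (dual (Tm f)))) \<cdot> t2 (dm g) (D (TT (cd f)))"
    using assms by (simp add: interchangeR3 idL ty assoc)
  also have "... = (Tm g \<otimes> (dual f \<cdot> s (cd f))) \<cdot> t2 (dm g) (D (TT (cd f)))"
    using assms by (simp add: s_nat)
  also have "... = (Tm g \<otimes> dual f) \<cdot> sb (cd f) (dm g)"
    using assms unfolding sb_def by (simp add: interchangeR idR ty assoc[symmetric])
  finally show ?thesis .
qed


lemma sb_ax1: assumes X: "ob X" and Y: "ob Y"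
  shows "Tm ((Id Y \<otimes> ev X) \<cdot> ((Id Y \<otimes> dual (eta X)) \<otimes> Id X)) =
    (Id (TT Y) \<otimes> ev (TT X)) \<cdot> ((sb (TT X) Y \<cdot> Tm (Id Y \<otimes> dual (mu X))) \<otimes> Id (TT X)) \<cdot> t2 (Y \<odot> D (TT X)) X"
proof -
  let ?s' = "s (TT X) \<cdot> Tm (dual (mu X))"
  let ?e = "ev X \<cdot> (dual (eta X) \<otimes> Id X)"
  have st1: "sb (TT X) Y \<cdot> Tm (Id Y \<otimes> dual (mu X)) = (Id (TT Y) \<otimes> ?s') \<cdot> t2 Y (D (TT X))"
  proof -
    have "sb (TT X) Y \<cdot> Tm (Id Y \<otimes> dual (mu X)) = (Id (TT Y) \<otimes> s (TT X)) \<cdot> (Id (TT Y) \<otimes> Tm (dual (mu X))) \<cdot> t2 Y (D (TT X))"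
      using t2_natR[of "dual (mu X)" Y] assms unfolding sb_def by (simp add: ty assoc)
    also have "... = (Id (TT Y) \<otimes> ?s') \<cdot> t2 Y (D (TT X))"
      using assms by (simp add: tcpR ty assoc)
    finally show ?thesis .
  qed
  have "(Id (TT Y) \<otimes> ev (TT X)) \<cdot> ((sb (TT X) Y \<cdot> Tm (Id Y \<otimes> dual (mu X))) \<otimes> Id (TT X)) \<cdot> t2 (Y \<odot> D (TT X)) X
     = (Id (TT Y) \<otimes> ev (TT X)) \<cdot> (Id (TT Y) \<otimes> ?s' \<otimes> Id (TT X)) \<cdot> (t2 Y (D (TT X)) \<otimes> Id (TT X)) \<cdot> t2 (Y \<odot> D (TT X)) X"
    using assms by (simp add: st1 tcpL tna_assoc ty assoc)
  also have "... = (Id (TT Y) \<otimes> (ev (TT X) \<cdot> (?s' \<otimes> Id (TT X)))) \<cdot> (Id (TT Y) \<otimes> t2 (D (TT X)) X) \<cdot> t2 Y (D (TT X) \<odot> X)"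
    using assms by (simp add: interchangeR3 t2_coassoc idL ty assoc)
  also have "... = (Id (TT Y) \<otimes> (ev (TT X) \<cdot> (?s' \<otimes> Id (TT X)) \<cdot> t2 (D (TT X)) X)) \<cdot> t2 Y (D (TT X) \<odot> X)"
    using assms by (simp add: interchangeR3 idL ty assoc)
  also have "... = (Id (TT Y) \<otimes> (t0 \<cdot> Tm (ev X) \<cdot> Tm (dual (eta X) \<otimes> Id X))) \<cdot> t2 Y (D (TT X) \<odot> X)"
    using assms by (simp add: s_ax1)
  also have "... = (Id (TT Y) \<otimes> t0) \<cdot> (Id (TT Y) \<otimes> Tm ?e) \<cdot> t2 Y (D (TT X) \<odot> X)"
    using assms by (simp add: tcpR Tm_cp ty assoc)
  also have "... = (Id (TT Y) \<otimes> t0) \<cdot> t2 Y U \<cdot> Tm (Id Y \<otimes> ?e)"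
    using t2_natR[of ?e Y] assms by (simp add: ty)
  also have "... = Tm (Id Y \<otimes> ?e)"
    using assms by (simp add: ext[OF t0_counitR] idL ty)
  also have "... = Tm ((Id Y \<otimes> ev X) \<cdot> ((Id Y \<otimes> dual (eta X)) \<otimes> Id X))"
    using assms by (simp add: tna_assoc interchangeR idL ty)
  finally show ?thesis by simp
qed

lemma sb_ax2: assumes X: "ob X" and Y: "ob Y"
  shows "((Id (TT Y) \<otimes> eta X) \<otimes> dual (Id X)) \<cdot> (Id (TT Y) \<otimes> coev X) =
    (((Id (TT Y) \<otimes> mu X) \<cdot> t2 Y (TT X)) \<otimes> dual (Id X)) \<cdot> sb X (Y \<odot> TT X) \<cdot> Tm (Id Y \<otimes> coev (TT X))"
proof -
  have "(((Id (TT Y) \<otimes> mu X) \<cdot> t2 Y (TT X)) \<otimes> dual (Id X)) \<cdot> sb X (Y \<odot> TT X) \<cdot> Tm (Id Y \<otimes> coev (TT X))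
    = (((Id (TT Y) \<otimes> mu X) \<cdot> t2 Y (TT X)) \<otimes> s X) \<cdot> t2 (Y \<odot> TT X) (D (TT X)) \<cdot> Tm (Id Y \<otimes> coev (TT X))"
    using assms unfolding sb_def by (simp add: dual_Id interchangeR3 idL idR ty assoc)
  also have "... = (Id (TT Y) \<otimes> mu X \<otimes> s X) \<cdot> (t2 Y (TT X) \<otimes> Id (TT (D (TT X)))) \<cdot> t2 (Y \<odot> TT X) (D (TT X)) \<cdot> Tm (Id Y \<otimes> coev (TT X))"
    using assms by (simp add: tcpL2 ty tna_assoc assoc)
  also have "... = (Id (TT Y) \<otimes> mu X \<otimes> s X) \<cdot> (Id (TT Y) \<otimes> t2 (TT X) (D (TT X))) \<cdot> t2 Y (TT X \<odot> D (TT X)) \<cdot> Tm (Id Y \<otimes> coev (TT X))"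
    using assms by (simp add: ext[OF t2_coassoc] ty assoc)
  also have "... = (Id (TT Y) \<otimes> mu X \<otimes> s X) \<cdot> (Id (TT Y) \<otimes> t2 (TT X) (D (TT X))) \<cdot> (Id (TT Y) \<otimes> Tm (coev (TT X))) \<cdot> t2 Y U"
    using t2_natR[of "coev (TT X)" Y] assms by (simp add: ty)
  also have "... = (Id (TT Y) \<otimes> ((mu X \<otimes> s X) \<cdot> t2 (TT X) (D (TT X)) \<cdot> Tm (coev (TT X)))) \<cdot> t2 Y U"
    using assms by (simp add: tcpR ty assoc)
  also have "... = (Id (TT Y) \<otimes> ((eta X \<otimes> Id (D X)) \<cdot> coev X \<cdot> t0)) \<cdot> t2 Y U"
    using assms by (simp add: s_ax2)
  also have "... = (Id (TT Y) \<otimes> ((eta X \<otimes> Id (D X)) \<cdot> coev X)) \<cdot> (Id (TT Y) \<otimes> t0) \<cdot> t2 Y U"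
    using assms by (simp add: tcpR ty assoc)
  also have "... = (Id (TT Y) \<otimes> ((eta X \<otimes> Id (D X)) \<cdot> coev X))"
    using assms by (simp add: t0_counitR idR ty)
  also have "... = ((Id (TT Y) \<otimes> eta X) \<otimes> dual (Id X)) \<cdot> (Id (TT Y) \<otimes> coev X)"
    using assms by (simp add: dual_Id tna_assoc interchangeR idL ty)
  finally show ?thesis by simp
qed

lemma sb_binary: "is_left_binary_antipode C T sb"
  unfolding is_left_binary_antipode_def ihom_def ihomm_def wl_def wr_def hom_def
  using sb_nat sb_ax1 sb_ax2 by (simp add: ty)

end


context LA begin
lemma untr_coev: "ob B \<Longrightarrow> ob X \<Longrightarrow> untr (B \<odot> X) X (Id B \<otimes> coev X) = Id (B \<odot> X)"
  by (simp add: Id_tna[symmetric] tna_assoc interchangeR zig idL ty)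
lemma untr_dual: assumes "arr f" "arr h" "ob B" "cd h = B \<odot> D (cd f)"
  shows "untr B (dm f) ((Id B \<otimes> dual f) \<cdot> h) = untr B (cd f) h \<cdot> (Id (dm h) \<otimes> f)"
proof -
  have "untr B (dm f) ((Id B \<otimes> dual f) \<cdot> h) = (Id B \<otimes> ev (dm f)) \<cdot> (Id B \<otimes> dual f \<otimes> Id (dm f)) \<cdot> (h \<otimes> Id (dm f))"
    using assms by (simp add: tcpL tna_assoc assoc ty)
  also have "... = (Id B \<otimes> (ev (dm f) \<cdot> (dual f \<otimes> Id (dm f)))) \<cdot> (h \<otimes> Id (dm f))"
    using assms by (simp add: interchangeR3 idL ty)
  also have "... = (Id B \<otimes> (ev (cd f) \<cdot> (Id (D (cd f)) \<otimes> f))) \<cdot> (h \<otimes> Id (dm f))"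
    using assms by (simp add: dual_ev)
  also have "... = (Id B \<otimes> ev (cd f)) \<cdot> (Id (B \<odot> D (cd f)) \<otimes> f) \<cdot> (h \<otimes> Id (dm f))"
    using assms by (simp add: tcpR Id_tna3 assoc ty)
  also have "... = (Id B \<otimes> ev (cd f)) \<cdot> (h \<otimes> f)"
    using assms by (simp add: slide2 ty)
  also have "... = (Id B \<otimes> ev (cd f)) \<cdot> (h \<otimes> Id (cd f)) \<cdot> (Id (dm h) \<otimes> f)"
    using assms by (simp add: slide1 ty)
  finally show ?thesis using assms by (simp add: assoc ty)
qed

abbreviation Hf where "Hf A B \<equiv> (Id (TT A) \<otimes> mu B) \<cdot> t2 A (TT B)"
lemma Hf_mu: assumes "ob A" "ob B"
  shows "(Id (TT A) \<otimes> mu B) \<cdot> t2 A (TT B) \<cdot> Tm (Id A \<otimes> mu B) = (Id (TT A) \<otimes> mu B) \<cdot> Hf A (TT B)"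
proof -
  have "(Id (TT A) \<otimes> mu B) \<cdot> t2 A (TT B) \<cdot> Tm (Id A \<otimes> mu B) = (Id (TT A) \<otimes> mu B) \<cdot> (Id (TT A) \<otimes> Tm (mu B)) \<cdot> t2 A (TT (TT B))"
    using t2_natR[of "mu B" A] assms by (simp add: ty assoc)
  also have "... = (Id (TT A) \<otimes> mu B) \<cdot> (Id (TT A) \<otimes> mu (TT B)) \<cdot> t2 A (TT (TT B))"
    using assms by (simp add: ext[OF interchangeR] mu_assoc idL ty)
  finally show ?thesis using assms by (simp add: assoc ty)
qed

end

locale BA = LA + fixes s assumes BA: "is_left_binary_antipode C T s"
begin
lemma s_ty[ty]: "ob X \<Longrightarrow> ob Y \<Longrightarrow> arr (s X Y)" "ob X \<Longrightarrow> ob Y \<Longrightarrow> dm (s X Y) = TT (Y \<odot> D (TT X))"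
   "ob X \<Longrightarrow> ob Y \<Longrightarrow> cd (s X Y) = TT Y \<odot> D X"
  using BA unfolding is_left_binary_antipode_def hom_def ihom_def by auto
lemma s_nat: "arr f \<Longrightarrow> arr g \<Longrightarrow> s (dm f) (cd g) \<cdot> Tm (g \<otimes> dual (Tm f)) = (Tm g \<otimes> dual f) \<cdot> s (cd f) (dm g)"
  using BA unfolding is_left_binary_antipode_def ihomm_def by auto
lemma s_ax1: "ob X \<Longrightarrow> ob Y \<Longrightarrow> Tm ((Id Y \<otimes> ev X) \<cdot> ((Id Y \<otimes> dual (eta X)) \<otimes> Id X)) =
    (Id (TT Y) \<otimes> ev (TT X)) \<cdot> ((s (TT X) Y \<cdot> Tm (Id Y \<otimes> dual (mu X))) \<otimes> Id (TT X)) \<cdot> t2 (Y \<odot> D (TT X)) X"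
  using BA unfolding is_left_binary_antipode_def ihomm_def ihom_def wl_def wr_def by auto
lemma s_ax2: "ob X \<Longrightarrow> ob Y \<Longrightarrow> ((Id (TT Y) \<otimes> eta X) \<otimes> dual (Id X)) \<cdot> (Id (TT Y) \<otimes> coev X) =
    (((Id (TT Y) \<otimes> mu X) \<cdot> t2 Y (TT X)) \<otimes> dual (Id X)) \<cdot> s X (Y \<odot> TT X) \<cdot> Tm (Id Y \<otimes> coev (TT X))"
  using BA unfolding is_left_binary_antipode_def ihomm_def ihom_def wl_def wr_def by auto

definition sg where "sg X Y = untr (TT Y) X (s X Y)"
lemma sg_ty[ty]: "ob X \<Longrightarrow> ob Y \<Longrightarrow> arr (sg X Y)" "ob X \<Longrightarrow> ob Y \<Longrightarrow> dm (sg X Y) = TT (Y \<odot> D (TT X)) \<odot> X"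
   "ob X \<Longrightarrow> ob Y \<Longrightarrow> cd (sg X Y) = TT Y"
  unfolding sg_def by (simp_all add: ty)

lemma ax1': assumes "ob X" "ob Y"
  shows "sg (TT X) Y \<cdot> (Tm (Id Y \<otimes> dual (mu X)) \<otimes> Id (TT X)) \<cdot> t2 (Y \<odot> D (TT X)) X =
     Tm ((Id Y \<otimes> ev X) \<cdot> ((Id Y \<otimes> dual (eta X)) \<otimes> Id X))"
  using assms unfolding sg_def by (simp add: s_ax1 tcpL assoc ty)

lemma ax2': assumes "ob A" "ob X"
  shows "Hf A X \<cdot> sg X (A \<odot> TT X) \<cdot> (Tm (Id A \<otimes> coev (TT X)) \<otimes> Id X) = Id (TT A) \<otimes> eta X"
proof -
  have e: "((Hf A X) \<otimes> Id (D X)) \<cdot> s X (A \<odot> TT X) \<cdot> Tm (Id A \<otimes> coev (TT X)) = ((Id (TT A) \<otimes> eta X) \<otimes> Id (D X)) \<cdot> (Id (TT A) \<otimes> coev X)"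
    using s_ax2[of X A] assms by (simp add: dual_Id)
  have "untr (TT A \<odot> TT X) X (((Hf A X) \<otimes> Id (D X)) \<cdot> s X (A \<odot> TT X) \<cdot> Tm (Id A \<otimes> coev (TT X)))
     = Hf A X \<cdot> untr (TT (A \<odot> TT X)) X (s X (A \<odot> TT X) \<cdot> Tm (Id A \<otimes> coev (TT X)))"
    using untr_post[of "s X (A \<odot> TT X) \<cdot> Tm (Id A \<otimes> coev (TT X))" "Hf A X" X] assms by (simp add: ty)
  also have "... = Hf A X \<cdot> sg X (A \<odot> TT X) \<cdot> (Tm (Id A \<otimes> coev (TT X)) \<otimes> Id X)"
    using assms unfolding sg_def by (simp add: untr_pre ty)
  finally have "Hf A X \<cdot> sg X (A \<odot> TT X) \<cdot> (Tm (Id A \<otimes> coev (TT X)) \<otimes> Id X) = untr (TT A \<odot> TT X) X (((Hf A X) \<otimes> Id (D X)) \<cdot> s X (A \<odot> TT X) \<cdot> Tm (Id A \<otimes> coev (TT X)))"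
    by simp
  also have "... = untr (TT A \<odot> TT X) X (((Id (TT A) \<otimes> eta X) \<otimes> Id (D X)) \<cdot> (Id (TT A) \<otimes> coev X))"
    by (simp add: e)
  also have "... = (Id (TT A) \<otimes> eta X) \<cdot> untr (TT A \<odot> X) X (Id (TT A) \<otimes> coev X)"
    using untr_post[of "Id (TT A) \<otimes> coev X" "Id (TT A) \<otimes> eta X" X] assms by (simp add: ty)
  also have "... = Id (TT A) \<otimes> eta X"
    using assms by (simp add: untr_coev idR ty)
  finally show ?thesis .
qed


lemma sg_nat1: assumes "arr f" "ob Y"
  shows "sg (dm f) Y \<cdot> (Tm (Id Y \<otimes> dual (Tm f)) \<otimes> Id (dm f)) = sg (cd f) Y \<cdot> (Id (TT (Y \<odot> D (TT (cd f)))) \<otimes> f)"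
proof -
  have "sg (dm f) Y \<cdot> (Tm (Id Y \<otimes> dual (Tm f)) \<otimes> Id (dm f)) = untr (TT Y) (dm f) (s (dm f) Y \<cdot> Tm (Id Y \<otimes> dual (Tm f)))"
    using assms unfolding sg_def by (simp add: untr_pre ty assoc)
  also have "... = untr (TT Y) (dm f) ((Id (TT Y) \<otimes> dual f) \<cdot> s (cd f) Y)"
    using s_nat[of f "Id Y"] assms by (simp add: Tm_Id ty)
  also have "... = sg (cd f) Y \<cdot> (Id (TT (Y \<odot> D (TT (cd f)))) \<otimes> f)"
    using assms unfolding sg_def by (simp add: untr_dual ty)
  finally show ?thesis .
qed

lemma sg_nat2: assumes "arr g" "ob X"
  shows "sg X (cd g) \<cdot> (Tm (g \<otimes> Id (D (TT X))) \<otimes> Id X) = Tm g \<cdot> sg X (dm g)"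
proof -
  have "sg X (cd g) \<cdot> (Tm (g \<otimes> Id (D (TT X))) \<otimes> Id X) = untr (TT (cd g)) X (s X (cd g) \<cdot> Tm (g \<otimes> Id (D (TT X))))"
    using assms unfolding sg_def by (simp add: untr_pre ty assoc)
  also have "... = untr (TT (cd g)) X ((Tm g \<otimes> Id (D X)) \<cdot> s X (dm g))"
    using s_nat[of "Id X" g] assms by (simp add: Tm_Id dual_Id ty)
  also have "... = Tm g \<cdot> sg X (dm g)"
    using untr_post[of "s X (dm g)" "Tm g" X] assms unfolding sg_def by (simp add: ty)
  finally show ?thesis .
qed

definition G where "G A B = sg (TT B) (A \<odot> TT B) \<cdot> ((Tm (Id (A \<odot> TT B) \<otimes> dual (mu B)) \<cdot> Tm (Id A \<otimes> coev (TT B))) \<otimes> Id (TT B))"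

lemma G_ty[ty]: "ob A \<Longrightarrow> ob B \<Longrightarrow> arr (G A B)" "ob A \<Longrightarrow> ob B \<Longrightarrow> dm (G A B) = TT A \<odot> TT B"
  "ob A \<Longrightarrow> ob B \<Longrightarrow> cd (G A B) = TT (A \<odot> TT B)"
  unfolding G_def by (simp_all add: ty)

lemma G_alt: assumes "ob A" "ob B"
  shows "G A B = Tm (Id A \<otimes> mu B) \<cdot> sg (TT B) (A \<odot> TT (TT B)) \<cdot> (Tm (Id A \<otimes> coev (TT (TT B))) \<otimes> Id (TT B))"
proof -
  have c: "(Id (TT B) \<otimes> dual (mu B)) \<cdot> coev (TT B) = (mu B \<otimes> Id (D (TT (TT B)))) \<cdot> coev (TT (TT B))"
    using coev_dual[of "mu B"] assms by (simp add: ty)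
  have "Tm (Id (A \<odot> TT B) \<otimes> dual (mu B)) \<cdot> Tm (Id A \<otimes> coev (TT B)) = Tm (Id A \<otimes> ((Id (TT B) \<otimes> dual (mu B)) \<cdot> coev (TT B)))"
    using assms by (simp add: Tm_cp[symmetric] tcpR Id_tna3 ty)
  also have "... = Tm (Id A \<otimes> mu B \<otimes> Id (D (TT (TT B)))) \<cdot> Tm (Id A \<otimes> coev (TT (TT B)))"
    using assms by (simp add: c Tm_cp[symmetric] tcpR ty)
  finally have k: "Tm (Id (A \<odot> TT B) \<otimes> dual (mu B)) \<cdot> Tm (Id A \<otimes> coev (TT B)) = Tm (Id A \<otimes> mu B \<otimes> Id (D (TT (TT B)))) \<cdot> Tm (Id A \<otimes> coev (TT (TT B)))" .
  have "G A B = sg (TT B) (A \<odot> TT B) \<cdot> (Tm ((Id A \<otimes> mu B) \<otimes> Id (D (TT (TT B)))) \<otimes> Id (TT B)) \<cdot> (Tm (Id A \<otimes> coev (TT (TT B))) \<otimes> Id (TT B))"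
    using assms unfolding G_def by (simp add: k tcpL tna_assoc ty)
  also have "... = Tm (Id A \<otimes> mu B) \<cdot> sg (TT B) (A \<odot> TT (TT B)) \<cdot> (Tm (Id A \<otimes> coev (TT (TT B))) \<otimes> Id (TT B))"
    using sg_nat2[of "Id A \<otimes> mu B" "TT B"] assms by (simp add: ext ty)
  finally show ?thesis .
qed

lemma HG: assumes "ob A" "ob B" shows "Hf A B \<cdot> G A B = Id (TT A \<odot> TT B)"
proof -
  have "Hf A B \<cdot> G A B = (Id (TT A) \<otimes> mu B) \<cdot> Hf A (TT B) \<cdot> sg (TT B) (A \<odot> TT (TT B)) \<cdot> (Tm (Id A \<otimes> coev (TT (TT B))) \<otimes> Id (TT B))"
    using assms by (simp add: G_alt ext3[OF Hf_mu] ty assoc)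
  also have "... = (Id (TT A) \<otimes> mu B) \<cdot> (Id (TT A) \<otimes> eta (TT B))"
    using ax2'[of A "TT B"] assms by (simp add: ty assoc)
  also have "... = Id (TT A \<odot> TT B)"
    using assms by (simp add: interchangeR mu_eta1 idL Id_tna ty)
  finally show ?thesis .
qed


lemma GH: assumes A: "ob A" and B: "ob B" shows "G A B \<cdot> Hf A B = Id (TT (A \<odot> TT B))"
proof -
  let ?Z = "A \<odot> TT B"
  let ?K = "Tm (Id ?Z \<otimes> dual (mu B)) \<cdot> Tm (Id A \<otimes> coev (TT B))"
  let ?k = "(Id ?Z \<otimes> dual (mu B)) \<cdot> (Id A \<otimes> coev (TT B))"
  have ZZ: "ob ?Z" using assms by (simp add: ty)
  have s1: "(?K \<otimes> Id (TT B)) \<cdot> (Id (TT A) \<otimes> mu B) = (Id (TT (?Z \<odot> D (TT (TT B)))) \<otimes> mu B) \<cdot> (?K \<otimes> Id (TT (TT B)))"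
  proof -
    have "(?K \<otimes> Id (TT B)) \<cdot> (Id (TT A) \<otimes> mu B) = ?K \<otimes> mu B" using assms by (simp add: slide1 ty)
    also have "... = (Id (TT (?Z \<odot> D (TT (TT B)))) \<otimes> mu B) \<cdot> (?K \<otimes> Id (TT (TT B)))" using assms by (simp add: slide2 ty)
    finally show ?thesis .
  qed
  have m: "(Id ?Z \<otimes> dual (Tm (mu B))) \<cdot> (Id ?Z \<otimes> dual (mu B)) = (Id ?Z \<otimes> dual (mu (TT B))) \<cdot> (Id ?Z \<otimes> dual (mu B))"
    using assms by (simp add: interchangeR idL dual_cp[symmetric] mu_assoc ty)
  have s3: "(Tm (Id ?Z \<otimes> dual (Tm (mu B))) \<otimes> Id (TT (TT B))) \<cdot> (?K \<otimes> Id (TT (TT B)))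
     = (Tm (Id ?Z \<otimes> dual (mu (TT B))) \<otimes> Id (TT (TT B))) \<cdot> (Tm ?k \<otimes> Id (TT (TT B)))"
  proof -
    have "Tm (Id ?Z \<otimes> dual (Tm (mu B))) \<cdot> ?K = Tm (Id ?Z \<otimes> dual (mu (TT B))) \<cdot> Tm ?k"
      using assms by (simp add: Tm_cp[symmetric] ty assoc[symmetric] m)
    then show ?thesis using assms by (simp add: tcpL[symmetric] ty)
  qed
  have "G A B \<cdot> Hf A B = sg (TT B) ?Z \<cdot> (?K \<otimes> Id (TT B)) \<cdot> (Id (TT A) \<otimes> mu B) \<cdot> t2 A (TT B)"
    using assms unfolding G_def by (simp add: assoc ty)
  also have "... = sg (TT B) ?Z \<cdot> (Id (TT (?Z \<odot> D (TT (TT B)))) \<otimes> mu B) \<cdot> (?K \<otimes> Id (TT (TT B))) \<cdot> t2 A (TT B)"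
    using assms by (simp add: ext[OF s1] ty assoc)
  also have "... = sg (TT (TT B)) ?Z \<cdot> (Tm (Id ?Z \<otimes> dual (Tm (mu B))) \<otimes> Id (TT (TT B))) \<cdot> (?K \<otimes> Id (TT (TT B))) \<cdot> t2 A (TT B)"
    using sg_nat1[of "mu B" ?Z] assms by (simp add: ext ty)
  also have "... = sg (TT (TT B)) ?Z \<cdot> (Tm (Id ?Z \<otimes> dual (mu (TT B))) \<otimes> Id (TT (TT B))) \<cdot> (Tm ?k \<otimes> Id (TT (TT B))) \<cdot> t2 A (TT B)"
    using assms by (simp add: ext[OF s3] ty assoc)
  also have "... = sg (TT (TT B)) ?Z \<cdot> (Tm (Id ?Z \<otimes> dual (mu (TT B))) \<otimes> Id (TT (TT B))) \<cdot> t2 (?Z \<odot> D (TT (TT B))) (TT B) \<cdot> Tm (?k \<otimes> Id (TT B))"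
    using t2_natL[of ?k "TT B"] assms by (simp add: ty)
  also have "... = Tm ((Id ?Z \<otimes> ev (TT B)) \<cdot> ((Id ?Z \<otimes> dual (eta (TT B))) \<otimes> Id (TT B))) \<cdot> Tm (?k \<otimes> Id (TT B))"
    using ax1'[of "TT B" ?Z] assms by (simp add: ext ty)
  also have "... = Tm ((Id ?Z \<otimes> ev (TT B)) \<cdot> (((Id ?Z \<otimes> dual (eta (TT B))) \<cdot> ?k) \<otimes> Id (TT B)))"
    using assms by (simp add: Tm_cp[symmetric] tcpL ty assoc)
  also have "... = Tm ((Id ?Z \<otimes> ev (TT B)) \<cdot> ((Id A \<otimes> coev (TT B)) \<otimes> Id (TT B)))"
  proof -
    have "(Id ?Z \<otimes> dual (eta (TT B))) \<cdot> ?k = (Id ?Z \<otimes> dual (mu B \<cdot> eta (TT B))) \<cdot> (Id A \<otimes> coev (TT B))"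
      using assms by (simp add: interchangeR idL dual_cp ty assoc[symmetric])
    also have "... = Id A \<otimes> coev (TT B)"
      using assms by (simp add: mu_eta1 dual_Id Id_tna idL ty)
    finally show ?thesis by simp
  qed
  also have "... = Id (TT ?Z)"
    using untr_coev[of A "TT B"] assms by (simp add: Tm_Id ty)
  finally show ?thesis .
qed

lemma hopf: "left_hopf C T"
  unfolding left_hopf_def wl_def hom_def
  using HG GH by (metis G_ty)

end


locale HO = LA + assumes HOPF: "left_hopf C T"
begin

definition Gi where "Gi A B = (SOME g. hom C g (TT A \<odot> TT B) (TT (A \<odot> TT B)) \<and>
   g \<cdot> Hf A B = Id (TT (A \<odot> TT B)) \<and> Hf A B \<cdot> g = Id (TT A \<odot> TT B))"

lemma Gi_props: assumes "ob A" "ob B"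
  shows "hom C (Gi A B) (TT A \<odot> TT B) (TT (A \<odot> TT B)) \<and>
   Gi A B \<cdot> Hf A B = Id (TT (A \<odot> TT B)) \<and> Hf A B \<cdot> Gi A B = Id (TT A \<odot> TT B)"
proof -
  have "\<exists>g. hom C g (TT A \<odot> TT B) (TT (A \<odot> TT B)) \<and>
   g \<cdot> Hf A B = Id (TT (A \<odot> TT B)) \<and> Hf A B \<cdot> g = Id (TT A \<odot> TT B)"
    using HOPF assms unfolding left_hopf_def wl_def by blast
  then show ?thesis unfolding Gi_def by (rule someI_ex)
qed

definition hf where "hf A B = Hf A B"
lemma hf_ty[ty]: "ob A \<Longrightarrow> ob B \<Longrightarrow> arr (hf A B)" "ob A \<Longrightarrow> ob B \<Longrightarrow> dm (hf A B) = TT (A \<odot> TT B)"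
  "ob A \<Longrightarrow> ob B \<Longrightarrow> cd (hf A B) = TT A \<odot> TT B"
  unfolding hf_def by (simp_all add: ty)

lemma Gi_ty[ty]: "ob A \<Longrightarrow> ob B \<Longrightarrow> arr (Gi A B)" "ob A \<Longrightarrow> ob B \<Longrightarrow> dm (Gi A B) = TT A \<odot> TT B"
  "ob A \<Longrightarrow> ob B \<Longrightarrow> cd (Gi A B) = TT (A \<odot> TT B)"
  using Gi_props unfolding hom_def by blast+

lemma GiH: "ob A \<Longrightarrow> ob B \<Longrightarrow> Gi A B \<cdot> hf A B = Id (TT (A \<odot> TT B))" using Gi_props unfolding hf_def by blast
lemma HGi: "ob A \<Longrightarrow> ob B \<Longrightarrow> hf A B \<cdot> Gi A B = Id (TT A \<odot> TT B)" using Gi_props unfolding hf_def by blast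

lemma GiH': assumes "ob A" "ob B" "arr y" "cd y = TT (A \<odot> TT B)" shows "Gi A B \<cdot> hf A B \<cdot> y = y"
  using ext[OF GiH[of A B] assms(3)] assms by (simp add: idL ty)
lemma HGi': assumes "ob A" "ob B" "arr y" "cd y = TT A \<odot> TT B" shows "hf A B \<cdot> Gi A B \<cdot> y = y"
  using ext[OF HGi[of A B] assms(3)] assms by (simp add: idL ty)

lemma Hf_nat1: assumes "arr f" "ob B"
  shows "hf (cd f) B \<cdot> Tm (f \<otimes> Id (TT B)) = (Tm f \<otimes> Id (TT B)) \<cdot> hf (dm f) B"
proof -
  have "hf (cd f) B \<cdot> Tm (f \<otimes> Id (TT B)) = (Id (TT (cd f)) \<otimes> mu B) \<cdot> (Tm f \<otimes> Id (TT (TT B))) \<cdot> t2 (dm f) (TT B)"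
    using t2_natL[of f "TT B"] assms unfolding hf_def by (simp add: ty assoc)
  also have "... = (Tm f \<otimes> Id (TT B)) \<cdot> hf (dm f) B"
    using assms unfolding hf_def by (simp add: idL idR ty assoc[symmetric] interchangeR)
  finally show ?thesis .
qed

lemma Hf_nat2: assumes "arr g" "ob A"
  shows "hf A (cd g) \<cdot> Tm (Id A \<otimes> Tm g) = (Id (TT A) \<otimes> Tm g) \<cdot> hf A (dm g)"
proof -
  have "hf A (cd g) \<cdot> Tm (Id A \<otimes> Tm g) = (Id (TT A) \<otimes> mu (cd g)) \<cdot> (Id (TT A) \<otimes> Tm (Tm g)) \<cdot> t2 A (TT (dm g))"
    using t2_natR[of "Tm g" A] assms unfolding hf_def by (simp add: ty assoc)
  also have "... = (Id (TT A) \<otimes> (Tm g \<cdot> mu (dm g))) \<cdot> t2 A (TT (dm g))"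
    using assms by (simp add: ext[OF interchangeR] idL ty mu_nat)
  also have "... = (Id (TT A) \<otimes> Tm g) \<cdot> hf A (dm g)"
    using assms unfolding hf_def by (simp add: tcpR ty assoc)
  finally show ?thesis .
qed

lemma Gi_nat1: assumes "arr f" "ob B"
  shows "Gi (cd f) B \<cdot> (Tm f \<otimes> Id (TT B)) = Tm (f \<otimes> Id (TT B)) \<cdot> Gi (dm f) B"
proof -
  have "Gi (cd f) B \<cdot> (Tm f \<otimes> Id (TT B)) = Gi (cd f) B \<cdot> (Tm f \<otimes> Id (TT B)) \<cdot> hf (dm f) B \<cdot> Gi (dm f) B"
    using assms by (simp add: HGi idR ty)
  also have "... = Gi (cd f) B \<cdot> hf (cd f) B \<cdot> Tm (f \<otimes> Id (TT B)) \<cdot> Gi (dm f) B"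
    using assms by (simp add: ext[OF Hf_nat1[symmetric]] ty assoc)
  also have "... = Tm (f \<otimes> Id (TT B)) \<cdot> Gi (dm f) B"
    using assms by (simp add: GiH' ty)
  finally show ?thesis .
qed

lemma Gi_nat2: assumes "arr g" "ob A"
  shows "Gi A (cd g) \<cdot> (Id (TT A) \<otimes> Tm g) = Tm (Id A \<otimes> Tm g) \<cdot> Gi A (dm g)"
proof -
  have "Gi A (cd g) \<cdot> (Id (TT A) \<otimes> Tm g) = Gi A (cd g) \<cdot> (Id (TT A) \<otimes> Tm g) \<cdot> hf A (dm g) \<cdot> Gi A (dm g)"
    using assms by (simp add: HGi idR ty)
  also have "... = Gi A (cd g) \<cdot> hf A (cd g) \<cdot> Tm (Id A \<otimes> Tm g) \<cdot> Gi A (dm g)"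
    using assms by (simp add: ext[OF Hf_nat2[symmetric]] ty assoc)
  also have "... = Tm (Id A \<otimes> Tm g) \<cdot> Gi A (dm g)"
    using assms by (simp add: GiH' ty)
  finally show ?thesis .
qed

lemma H1: assumes "ob A" "ob B" shows "Gi A B \<cdot> t2 A B = Tm (Id A \<otimes> eta B)"
proof -
  have h: "hf A B \<cdot> Tm (Id A \<otimes> eta B) = t2 A B"
  proof -
    have "hf A B \<cdot> Tm (Id A \<otimes> eta B) = (Id (TT A) \<otimes> mu B) \<cdot> (Id (TT A) \<otimes> Tm (eta B)) \<cdot> t2 A B"
      using t2_natR[of "eta B" A] assms unfolding hf_def by (simp add: ty assoc)
    also have "... = t2 A B" using assms by (simp add: ext[OF interchangeR] idL mu_eta2 Id_tna ty)
    finally show ?thesis .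
  qed
  have "Gi A B \<cdot> t2 A B = Gi A B \<cdot> hf A B \<cdot> Tm (Id A \<otimes> eta B)" using h by simp
  also have "... = Tm (Id A \<otimes> eta B)" using assms by (simp add: GiH' ty)
  finally show ?thesis .
qed

lemma hf_mu: assumes "ob A" "ob B"
  shows "hf A B \<cdot> Tm (Id A \<otimes> mu B) = (Id (TT A) \<otimes> mu B) \<cdot> hf A (TT B)"
  using Hf_mu[OF assms] assms unfolding hf_def by (simp add: assoc ty)

lemma L1: assumes "ob A" "ob B"
  shows "Tm (Id A \<otimes> mu B) \<cdot> Gi A (TT B) \<cdot> (Id (TT A) \<otimes> eta (TT B)) = Gi A B"
proof -
  have "hf A B \<cdot> Tm (Id A \<otimes> mu B) \<cdot> Gi A (TT B) \<cdot> (Id (TT A) \<otimes> eta (TT B)) = (Id (TT A) \<otimes> mu B) \<cdot> hf A (TT B) \<cdot> Gi A (TT B) \<cdot> (Id (TT A) \<otimes> eta (TT B))"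
    using assms by (simp add: ext[OF hf_mu] ty assoc)
  also have "... = Id (TT A \<odot> TT B)"
    using assms by (simp add: HGi' interchangeR idL mu_eta1 Id_tna ty)
  finally have e: "hf A B \<cdot> Tm (Id A \<otimes> mu B) \<cdot> Gi A (TT B) \<cdot> (Id (TT A) \<otimes> eta (TT B)) = Id (TT A \<odot> TT B)" .
  have "Tm (Id A \<otimes> mu B) \<cdot> Gi A (TT B) \<cdot> (Id (TT A) \<otimes> eta (TT B)) = Gi A B \<cdot> hf A B \<cdot> Tm (Id A \<otimes> mu B) \<cdot> Gi A (TT B) \<cdot> (Id (TT A) \<otimes> eta (TT B))"
    using assms by (simp add: GiH' ty)
  also have "... = Gi A B" using assms by (simp add: e idR ty)
  finally show ?thesis .
qed

lemma L3: assumes "ob A" shows "mu A \<cdot> Gi U A = t0 \<otimes> Id (TT A)"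
proof -
  have m: "(t0 \<otimes> Id (TT A)) \<cdot> hf U A = mu A"
  proof -
    have "(t0 \<otimes> Id (TT A)) \<cdot> hf U A = (t0 \<otimes> mu A) \<cdot> t2 U (TT A)"
      using assms unfolding hf_def by (simp add: ext[OF interchangeR] idL idR ty)
    also have "... = mu A \<cdot> (t0 \<otimes> Id (TT (TT A))) \<cdot> t2 U (TT A)"
    proof -
      have "t0 \<otimes> mu A = (Id U \<otimes> mu A) \<cdot> (t0 \<otimes> Id (TT (TT A)))" using slide2[of t0 "mu A" U "TT (TT A)"] assms by (simp add: ty)
      then show ?thesis using assms by (simp add: tna_U assoc ty)
    qed
    also have "... = mu A" using assms by (simp add: t0_counitL idR ty)
    finally show ?thesis .
  qed
  have "mu A \<cdot> Gi U A = (t0 \<otimes> Id (TT A)) \<cdot> hf U A \<cdot> Gi U A" using ext[OF m, of "Gi U A"] assms by (simp add: ty)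
  also have "... = t0 \<otimes> Id (TT A)" using assms by (simp add: HGi idR ty)
  finally show ?thesis .
qed

lemma Hf_coassoc: assumes "ob A" "ob B" "ob C'"
  shows "(Id (TT A) \<otimes> hf B C') \<cdot> t2 A (B \<odot> TT C') = (t2 A B \<otimes> Id (TT C')) \<cdot> hf (A \<odot> B) C'"
proof -
  have "(Id (TT A) \<otimes> hf B C') \<cdot> t2 A (B \<odot> TT C') = (Id (TT A) \<otimes> Id (TT B) \<otimes> mu C') \<cdot> (Id (TT A) \<otimes> t2 B (TT C')) \<cdot> t2 A (B \<odot> TT C')"
    using assms unfolding hf_def by (simp add: tcpR ty assoc)
  also have "... = (Id (TT A) \<otimes> Id (TT B) \<otimes> mu C') \<cdot> (t2 A B \<otimes> Id (TT (TT C'))) \<cdot> t2 (A \<odot> B) (TT C')"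
    using assms by (simp add: t2_coassoc ty)
  also have "... = (t2 A B \<otimes> mu C') \<cdot> t2 (A \<odot> B) (TT C')"
    using assms by (simp add: Id_tna3 slide2 ty assoc[symmetric])
  also have "... = (t2 A B \<otimes> Id (TT C')) \<cdot> hf (A \<odot> B) C'"
    using assms unfolding hf_def by (simp add: slide1 ty assoc[symmetric])
  finally show ?thesis .
qed

lemma L2: assumes "ob A" "ob B" "ob C'"
  shows "(Id (TT A) \<otimes> Gi B C') \<cdot> (t2 A B \<otimes> Id (TT C')) = t2 A (B \<odot> TT C') \<cdot> Gi (A \<odot> B) C'"
proof -
  have "(Id (TT A) \<otimes> Gi B C') \<cdot> (t2 A B \<otimes> Id (TT C')) = (Id (TT A) \<otimes> Gi B C') \<cdot> (t2 A B \<otimes> Id (TT C')) \<cdot> hf (A \<odot> B) C' \<cdot> Gi (A \<odot> B) C'"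
    using assms by (simp add: HGi idR ty)
  also have "... = (Id (TT A) \<otimes> Gi B C') \<cdot> (Id (TT A) \<otimes> hf B C') \<cdot> t2 A (B \<odot> TT C') \<cdot> Gi (A \<odot> B) C'"
    using assms by (simp add: ext[OF Hf_coassoc[symmetric]] ty assoc)
  also have "... = t2 A (B \<odot> TT C') \<cdot> Gi (A \<odot> B) C'"
    using assms by (simp add: ext[OF interchangeR] idL GiH Id_tna ty)
  finally show ?thesis .
qed

definition sig where "sig X = t0 \<cdot> Tm (ev (TT X)) \<cdot> Gi (D (TT X)) X \<cdot> (Id (TT (D (TT X))) \<otimes> eta X)"
definition sa where "sa X = tr (TT (D (TT X))) X (sig X)"

lemma sig_ty[ty]: "ob X \<Longrightarrow> arr (sig X)" "ob X \<Longrightarrow> dm (sig X) = TT (D (TT X)) \<odot> X" "ob X \<Longrightarrow> cd (sig X) = U"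
  unfolding sig_def by (simp_all add: ty)
lemma sa_ty[ty]: "ob X \<Longrightarrow> arr (sa X)" "ob X \<Longrightarrow> dm (sa X) = TT (D (TT X))" "ob X \<Longrightarrow> cd (sa X) = D X"
  unfolding sa_def by (simp_all add: ty)

lemma sa_ev: "ob X \<Longrightarrow> ev X \<cdot> (sa X \<otimes> Id X) = sig X"
  using untr_tr[of "sig X" "TT (D (TT X))" X] unfolding sa_def by (simp add: ty tna_U)

lemma sig_nat: assumes f: "arr f"
  shows "sig (dm f) \<cdot> (Tm (dual (Tm f)) \<otimes> Id (dm f)) = sig (cd f) \<cdot> (Id (TT (D (TT (cd f)))) \<otimes> f)"
proof -
  let ?X = "dm f" and ?Y = "cd f"
  have "sig ?X \<cdot> (Tm (dual (Tm f)) \<otimes> Id ?X) = t0 \<cdot> Tm (ev (TT ?X)) \<cdot> Gi (D (TT ?X)) ?X \<cdot> (Tm (dual (Tm f)) \<otimes> Id (TT ?X)) \<cdot> (Id (TT (D (TT ?Y))) \<otimes> eta ?X)"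
  proof -
    have "(Id (TT (D (TT ?X))) \<otimes> eta ?X) \<cdot> (Tm (dual (Tm f)) \<otimes> Id ?X) = (Tm (dual (Tm f)) \<otimes> Id (TT ?X)) \<cdot> (Id (TT (D (TT ?Y))) \<otimes> eta ?X)"
      using f by (simp add: slide1 slide2 ty)
    then show ?thesis using f unfolding sig_def by (simp add: assoc ty)
  qed
  also have "... = t0 \<cdot> Tm (ev (TT ?X)) \<cdot> Tm (dual (Tm f) \<otimes> Id (TT ?X)) \<cdot> Gi (D (TT ?Y)) ?X \<cdot> (Id (TT (D (TT ?Y))) \<otimes> eta ?X)"
    using Gi_nat1[of "dual (Tm f)" ?X] f by (simp add: ext ty)
  also have "... = t0 \<cdot> Tm (ev (TT ?Y)) \<cdot> Tm (Id (D (TT ?Y)) \<otimes> Tm f) \<cdot> Gi (D (TT ?Y)) ?X \<cdot> (Id (TT (D (TT ?Y))) \<otimes> eta ?X)"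
  proof -
    have e: "Tm (ev (TT ?X)) \<cdot> Tm (dual (Tm f) \<otimes> Id (TT ?X)) = Tm (ev (TT ?Y)) \<cdot> Tm (Id (D (TT ?Y)) \<otimes> Tm f)"
      using dual_ev[of "Tm f"] f by (simp add: Tm_cp[symmetric] ty)
    show ?thesis using f by (simp add: ext[OF e] ty assoc)
  qed
  also have "... = t0 \<cdot> Tm (ev (TT ?Y)) \<cdot> Gi (D (TT ?Y)) ?Y \<cdot> (Id (TT (D (TT ?Y))) \<otimes> Tm f) \<cdot> (Id (TT (D (TT ?Y))) \<otimes> eta ?X)"
    using Gi_nat2[of f "D (TT ?Y)"] f by (simp add: ext ty)
  also have "... = t0 \<cdot> Tm (ev (TT ?Y)) \<cdot> Gi (D (TT ?Y)) ?Y \<cdot> (Id (TT (D (TT ?Y))) \<otimes> eta ?Y) \<cdot> (Id (TT (D (TT ?Y))) \<otimes> f)"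
    using f by (simp add: tcpR[symmetric] eta_nat ty)
  also have "... = sig ?Y \<cdot> (Id (TT (D (TT ?Y))) \<otimes> f)"
    using f unfolding sig_def by (simp add: assoc ty)
  finally show ?thesis .
qed

lemma sa_nat: assumes f: "arr f" shows "dual f \<cdot> sa (cd f) = sa (dm f) \<cdot> Tm (dual (Tm f))"
proof (rule untr_inj[of _ _ "TT (D (TT (cd f)))" U "dm f"])
  have "untr U (dm f) (dual f \<cdot> sa (cd f)) = untr U (dm f) ((Id U \<otimes> dual f) \<cdot> sa (cd f))"
    using f by (simp add: tna_U ty)
  also have "... = untr U (cd f) (sa (cd f)) \<cdot> (Id (TT (D (TT (cd f)))) \<otimes> f)"
    using f by (simp add: untr_dual ty)
  also have "... = sig (cd f) \<cdot> (Id (TT (D (TT (cd f)))) \<otimes> f)"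
    using f by (simp add: tna_U sa_ev ty)
  also have "... = sig (dm f) \<cdot> (Tm (dual (Tm f)) \<otimes> Id (dm f))"
    using f by (simp add: sig_nat)
  also have "... = untr U (dm f) (sa (dm f) \<cdot> Tm (dual (Tm f)))"
    using f by (simp add: tna_U tcpL ext[OF sa_ev] assoc ty)
  finally show "untr U (dm f) (dual f \<cdot> sa (cd f)) = untr U (dm f) (sa (dm f) \<cdot> Tm (dual (Tm f)))" .
qed (use f in \<open>simp_all add: ty\<close>)


lemma sa_ax1: assumes X: "ob X"
  shows "t0 \<cdot> Tm (ev X) \<cdot> Tm (dual (eta X) \<otimes> Id X) =
    ev (TT X) \<cdot> ((sa (TT X) \<cdot> Tm (dual (mu X))) \<otimes> Id (TT X)) \<cdot> t2 (D (TT X)) X"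
proof -
  let ?dm = "dual (mu X)"
  have "ev (TT X) \<cdot> ((sa (TT X) \<cdot> Tm ?dm) \<otimes> Id (TT X)) \<cdot> t2 (D (TT X)) X
      = sig (TT X) \<cdot> (Tm ?dm \<otimes> Id (TT X)) \<cdot> t2 (D (TT X)) X"
    using X by (simp add: tcpL ext[OF sa_ev] ty assoc)
  also have "... = t0 \<cdot> Tm (ev (TT (TT X))) \<cdot> Gi (D (TT (TT X))) (TT X) \<cdot> (Tm ?dm \<otimes> Id (TT (TT X))) \<cdot> (Id (TT (D (TT X))) \<otimes> eta (TT X)) \<cdot> t2 (D (TT X)) X"
  proof -
    have e: "(Id (TT (D (TT (TT X)))) \<otimes> eta (TT X)) \<cdot> (Tm ?dm \<otimes> Id (TT X)) = (Tm ?dm \<otimes> Id (TT (TT X))) \<cdot> (Id (TT (D (TT X))) \<otimes> eta (TT X))"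
      using X by (simp add: slide1 slide2 ty)
    show ?thesis using X unfolding sig_def by (simp add: ext[OF e] assoc ty)
  qed
  also have "... = t0 \<cdot> Tm (ev (TT (TT X))) \<cdot> Tm (?dm \<otimes> Id (TT (TT X))) \<cdot> Gi (D (TT X)) (TT X) \<cdot> (Id (TT (D (TT X))) \<otimes> eta (TT X)) \<cdot> t2 (D (TT X)) X"
    using Gi_nat1[of ?dm "TT X"] X by (simp add: ext ty)
  also have "... = t0 \<cdot> Tm (ev (TT X)) \<cdot> Tm (Id (D (TT X)) \<otimes> mu X) \<cdot> Gi (D (TT X)) (TT X) \<cdot> (Id (TT (D (TT X))) \<otimes> eta (TT X)) \<cdot> t2 (D (TT X)) X"
  proof -
    have e: "Tm (ev (TT (TT X))) \<cdot> Tm (?dm \<otimes> Id (TT (TT X))) = Tm (ev (TT X)) \<cdot> Tm (Id (D (TT X)) \<otimes> mu X)"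
      using dual_ev[of "mu X"] X by (simp add: Tm_cp[symmetric] ty)
    show ?thesis using X by (simp add: ext[OF e] ty assoc)
  qed
  also have "... = t0 \<cdot> Tm (ev (TT X)) \<cdot> Gi (D (TT X)) X \<cdot> t2 (D (TT X)) X"
    using X by (simp add: ext3[OF L1] ty)
  also have "... = t0 \<cdot> Tm (ev (TT X)) \<cdot> Tm (Id (D (TT X)) \<otimes> eta X)"
    using X by (simp add: H1 ty)
  also have "... = t0 \<cdot> Tm (ev X) \<cdot> Tm (dual (eta X) \<otimes> Id X)"
    using dual_ev[of "eta X"] X by (simp add: Tm_cp[symmetric] ty)
  finally show ?thesis by simp
qed

lemma sa_ax2: assumes X: "ob X"
  shows "(eta X \<otimes> Id (D X)) \<cdot> coev X \<cdot> t0 = (mu X \<otimes> sa X) \<cdot> t2 (TT X) (D (TT X)) \<cdot> Tm (coev (TT X))"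
proof (rule untr_inj[of _ _ "TT U" "TT X" X])
  let ?k = "t2 (TT X) (D (TT X)) \<cdot> Tm (coev (TT X))"
  have "untr (TT X) X ((eta X \<otimes> Id (D X)) \<cdot> coev X \<cdot> t0) = eta X \<cdot> untr X X (coev X \<cdot> t0)"
    using untr_post[of "coev X \<cdot> t0" "eta X" X] X by (simp add: ty)
  also have "... = eta X \<cdot> (t0 \<otimes> Id X)"
    using X by (simp add: untr_pre zig ty idL)
  finally have L: "untr (TT X) X ((eta X \<otimes> Id (D X)) \<cdot> coev X \<cdot> t0) = eta X \<cdot> (t0 \<otimes> Id X)" .
  have "untr (TT X) X ((mu X \<otimes> sa X) \<cdot> ?k) = untr (TT X) X ((mu X \<otimes> Id (D X)) \<cdot> (Id (TT (TT X)) \<otimes> sa X) \<cdot> ?k)"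
    using X by (simp add: slide1 ty assoc[symmetric])
  also have "... = mu X \<cdot> untr (TT (TT X)) X ((Id (TT (TT X)) \<otimes> sa X) \<cdot> ?k)"
    using untr_post[of "(Id (TT (TT X)) \<otimes> sa X) \<cdot> ?k" "mu X" X] X by (simp add: ty)
  also have "... = mu X \<cdot> (Id (TT (TT X)) \<otimes> sig X) \<cdot> (?k \<otimes> Id X)"
  proof -
    have "untr (TT (TT X)) X (Id (TT (TT X)) \<otimes> sa X) = Id (TT (TT X)) \<otimes> sig X"
      using X by (simp add: tna_assoc interchangeR idL sa_ev ty)
    then show ?thesis using X by (simp add: untr_pre ty)
  qed
  also have "... = mu X \<cdot> (Id (TT (TT X)) \<otimes> t0) \<cdot> (Id (TT (TT X)) \<otimes> Tm (ev (TT X))) \<cdot> (Id (TT (TT X)) \<otimes> Gi (D (TT X)) X)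
       \<cdot> (t2 (TT X) (D (TT X)) \<otimes> Id (TT X)) \<cdot> (Tm (coev (TT X)) \<otimes> Id (TT X)) \<cdot> (Id (TT U) \<otimes> eta X)"
  proof -
    have a: "(Id (TT (TT X)) \<otimes> Id (TT (D (TT X))) \<otimes> eta X) \<cdot> (?k \<otimes> Id X) = (t2 (TT X) (D (TT X)) \<otimes> Id (TT X)) \<cdot> (Tm (coev (TT X)) \<otimes> Id (TT X)) \<cdot> (Id (TT U) \<otimes> eta X)"
    proof -
      have "(Id (TT (TT X)) \<otimes> Id (TT (D (TT X))) \<otimes> eta X) \<cdot> (?k \<otimes> Id X) = ?k \<otimes> eta X"
        using X by (simp add: Id_tna3 slide2 ty)
      also have "... = (?k \<otimes> Id (TT X)) \<cdot> (Id (TT U) \<otimes> eta X)"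
        using X by (simp add: slide1 ty)
      finally show ?thesis using X by (simp add: tcpL assoc ty)
    qed
    have "Id (TT (TT X)) \<otimes> sig X = (Id (TT (TT X)) \<otimes> t0) \<cdot> (Id (TT (TT X)) \<otimes> Tm (ev (TT X))) \<cdot> (Id (TT (TT X)) \<otimes> Gi (D (TT X)) X) \<cdot> (Id (TT (TT X)) \<otimes> Id (TT (D (TT X))) \<otimes> eta X)"
      using X unfolding sig_def by (simp add: tcpR assoc Id_tna3 ty)
    then show ?thesis using X a by (simp add: assoc ty)
  qed
  also have "... = mu X \<cdot> (Id (TT (TT X)) \<otimes> t0) \<cdot> (Id (TT (TT X)) \<otimes> Tm (ev (TT X))) \<cdot> t2 (TT X) (D (TT X) \<odot> TT X) \<cdot> Gi (TT X \<odot> D (TT X)) X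
       \<cdot> (Tm (coev (TT X)) \<otimes> Id (TT X)) \<cdot> (Id (TT U) \<otimes> eta X)"
    using L2[of "TT X" "D (TT X)" X] X by (simp add: ext ty)
  also have "... = mu X \<cdot> (Id (TT (TT X)) \<otimes> t0) \<cdot> t2 (TT X) U \<cdot> Tm (Id (TT X) \<otimes> ev (TT X)) \<cdot> Gi (TT X \<odot> D (TT X)) X
       \<cdot> (Tm (coev (TT X)) \<otimes> Id (TT X)) \<cdot> (Id (TT U) \<otimes> eta X)"
    using t2_natR[of "ev (TT X)" "TT X"] X by (simp add: ext ty)
  also have "... = mu X \<cdot> Tm (Id (TT X) \<otimes> ev (TT X)) \<cdot> Tm (coev (TT X) \<otimes> Id (TT X)) \<cdot> Gi U X \<cdot> (Id (TT U) \<otimes> eta X)"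
    using Gi_nat1[of "coev (TT X)" X] X by (simp add: ext t0_counitR idL ty)
  also have "... = mu X \<cdot> Gi U X \<cdot> (Id (TT U) \<otimes> eta X)"
    using X by (simp add: ext[OF Tm_cp[symmetric]] zig Tm_Id idL ty)
  also have "... = eta X \<cdot> (t0 \<otimes> Id X)"
  proof -
    have "mu X \<cdot> Gi U X \<cdot> (Id (TT U) \<otimes> eta X) = (t0 \<otimes> Id (TT X)) \<cdot> (Id (TT U) \<otimes> eta X)"
      using X by (simp add: ext[OF L3] ty)
    also have "... = t0 \<otimes> eta X" using X by (simp add: slide1 ty)
    also have "... = (Id U \<otimes> eta X) \<cdot> (t0 \<otimes> Id X)" using X by (simp add: slide2 ty)
    finally show ?thesis using X by (simp add: tna_U ty)
  qed
  finally show "untr (TT X) X ((eta X \<otimes> Id (D X)) \<cdot> coev X \<cdot> t0) = untr (TT X) X ((mu X \<otimes> sa X) \<cdot> ?k)" using L by simp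
qed (use X in \<open>simp_all add: ty\<close>)

lemma sa_unary: "is_left_unary_antipode C T sa"
  unfolding is_left_unary_antipode_def wr_def hom_def
  using sa_nat sa_ax1 sa_ax2 by (simp add: ty)

end

theorem mainTheorem8:
  fixes C :: "('o, 'm) lacat" and T :: "('o, 'm) bimonad_data"
  assumes "left_autonomous C" and "bimonad C T"
  shows "(has_left_unary_antipode C T \<longleftrightarrow> has_left_binary_antipode C T) \<and>
         (has_left_binary_antipode C T \<longleftrightarrow> left_hopf C T)"
proof -
  interpret LA C T using assms by unfold_locales
  have a: "has_left_unary_antipode C T \<Longrightarrow> has_left_binary_antipode C T"
  proof -
    assume "has_left_unary_antipode C T"
    then obtain s where s: "is_left_unary_antipode C T s" unfolding has_left_unary_antipode_def by blast
    interpret UA C T s using s by unfold_locales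
    show ?thesis unfolding has_left_binary_antipode_def using sb_binary by blast
  qed
  have b: "has_left_binary_antipode C T \<Longrightarrow> left_hopf C T"
  proof -
    assume "has_left_binary_antipode C T"
    then obtain s where s: "is_left_binary_antipode C T s" unfolding has_left_binary_antipode_def by blast
    interpret BA C T s using s by unfold_locales
    show ?thesis using hopf .
  qed
  have c: "left_hopf C T \<Longrightarrow> has_left_unary_antipode C T"
  proof -
    assume h: "left_hopf C T"
    interpret HO C T using h by unfold_locales
    show ?thesis unfolding has_left_unary_antipode_def using sa_unary by blast
  qed
  show ?thesis using a b c by blast
qed

end
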